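(* Fix $X\in\mathbb R^{n\times p}$ and $\mathbf y\in\mathbb R^n$ such that $X^{\top}X$ is invertible. Fix $\eta\in(0,1)$ and $\nu\in(0,1/e)$. Let $\widetilde{X^{\top}X}=X^{\top}X+N$ and $\widetilde{X^{\top}\mathbf y}=X^{\top}\mathbf y+\mathbf n$, where each entry of the $p\times p$ matrix $N$ and of the vector $\mathbf n\in\mathbb R^p$ is sampled i.i.d. from $\mathcal N(0,\sigma^2)$. Let $\hat{\boldsymbol\beta}=(X^{\top}X)^{-1}X^{\top}\mathbf y$ and $\tilde{\boldsymbol\beta}=(\widetilde{X^{\top}X})^{-1}\widetilde{X^{\top}\mathbf y}$. Then there exists a constant $C\ge1$ such that if $\sigma_{\min}(X^{\top}X)\ge\frac{2C}{\eta}\cdot\sigma\sqrt p\log(1/\nu)$, then with probability at least $1-\nu$, \[ \left\|\tilde{\boldsymbol\beta}-\hat{\boldsymbol\beta}\right\|\le2\eta\|\hat{\boldsymbol\beta}\|+\frac{\eta}{C}. \]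
   Context: $\sigma_{\min}(M)$ denotes the least singular value of $M$; $\|\cdot\|$ is the Euclidean norm. *)

theory Defs
  imports "HOL-Probability.Probability" "Jordan_Normal_Form.Gauss_Jordan_Elimination"
    "Jordan_Normal_Form.Char_Poly"
begin

definition vnorm :: "real vec \<Rightarrow> real" where
  "vnorm v = sqrt (\<Sum>i<dim_vec v. (v $ i)\<^sup>2)"

definition sigma_min :: "real mat \<Rightarrow> real" where
  "sigma_min M = sqrt (Min {k. eigenvalue (transpose_mat M * M) k})"

text \<open>Matrix inverse (convention: zero matrix if singular; irrelevant, probability 0).\<close>
definition minv :: "real mat \<Rightarrow> real mat" where
  "minv A = (case mat_inverse A of Some B \<Rightarrow> B | None \<Rightarrow> 0\<^sub>m (dim_row A) (dim_col A))"

text \<open>Gaussian N(0, sigma^2) on the reals (sigma = standard deviation).\<close>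
definition gauss :: "real \<Rightarrow> real measure" where
  "gauss \<sigma> = density lborel (normal_density 0 \<sigma>)"

definition noise_space :: "nat \<Rightarrow> real \<Rightarrow> ((nat \<times> nat \<Rightarrow> real) \<times> (nat \<Rightarrow> real)) measure" where
  "noise_space p \<sigma> = (PiM ({..<p} \<times> {..<p}) (\<lambda>_. gauss \<sigma>)) \<Otimes>\<^sub>M (PiM {..<p} (\<lambda>_. gauss \<sigma>))"

definition noise_mat :: "nat \<Rightarrow> (nat \<times> nat \<Rightarrow> real) \<times> (nat \<Rightarrow> real) \<Rightarrow> real mat" where
  "noise_mat p \<omega> = mat p p (\<lambda>ij. fst \<omega> ij)"

definition noise_vec :: "nat \<Rightarrow> (nat \<times> nat \<Rightarrow> real) \<times> (nat \<Rightarrow> real) \<Rightarrow> real vec" where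
  "noise_vec p \<omega> = vec p (\<lambda>i. snd \<omega> i)"

end

theory Submission
  imports Defs
begin


lemma vnorm_L2: "vnorm v = L2_set (\<lambda>i. v $ i) {..<dim_vec v}"
  unfolding vnorm_def L2_set_def by simp

lemma vnorm_nonneg: "vnorm v \<ge> 0"
  unfolding vnorm_def by (auto intro!: sum_nonneg)

lemma vnorm_sq: "(vnorm v)\<^sup>2 = v \<bullet> v"
proof -
  have "0 \<le> (\<Sum>i<dim_vec v. (v $ i)\<^sup>2)" by (intro sum_nonneg) auto
  then show ?thesis unfolding vnorm_def scalar_prod_def
    by (simp add: power2_eq_square atLeast0LessThan)
qed

lemma scalar_prod_sum: "dim_vec u = dim_vec v \<Longrightarrow> u \<bullet> v = (\<Sum>i<dim_vec v. u $ i * v $ i)"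
  unfolding scalar_prod_def by (simp add: atLeast0LessThan)

lemma vnorm_cs: assumes "dim_vec u = dim_vec v" shows "\<bar>u \<bullet> v\<bar> \<le> vnorm u * vnorm v"
proof -
  have "\<bar>u \<bullet> v\<bar> \<le> (\<Sum>i<dim_vec v. \<bar>u $ i\<bar> * \<bar>v $ i\<bar>)"
    unfolding scalar_prod_sum[OF assms] by (rule order.trans[OF sum_abs], simp add: abs_mult)
  also have "\<dots> \<le> vnorm u * vnorm v"
    unfolding vnorm_L2 assms by (rule L2_set_mult_ineq)
  finally show ?thesis .
qed

lemma vnorm_add: assumes "dim_vec u = dim_vec v" shows "vnorm (u + v) \<le> vnorm u + vnorm v"
proof -
  have "vnorm (u + v) = L2_set (\<lambda>i. u $ i + v $ i) {..<dim_vec v}"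
    unfolding vnorm_L2 using assms by (auto intro!: L2_set_cong)
  also have "\<dots> \<le> vnorm u + vnorm v" unfolding vnorm_L2 assms by (rule L2_set_triangle_ineq)
  finally show ?thesis .
qed

lemma vnorm_smult: "vnorm (a \<cdot>\<^sub>v v) = \<bar>a\<bar> * vnorm v"
proof -
  have "vnorm (a \<cdot>\<^sub>v v) = sqrt (a\<^sup>2 * (\<Sum>i<dim_vec v. (v $ i)\<^sup>2))"
    unfolding vnorm_def by (simp add: sum_distrib_left power_mult_distrib)
  also have "\<dots> = \<bar>a\<bar> * vnorm v" unfolding vnorm_def by (simp add: real_sqrt_mult)
  finally show ?thesis .
qed

lemma vnorm_uminus: "vnorm (- v) = vnorm v"
  unfolding vnorm_def by simp

lemma vnorm_minus: assumes "dim_vec u = dim_vec v" shows "vnorm (u - v) \<le> vnorm u + vnorm v"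
proof -
  have "u - v = u + (- v)" using assms by (auto simp: vec_eq_iff)
  then show ?thesis using vnorm_add[of u "-v"] assms by (simp add: vnorm_uminus)
qed

lemma vnorm_rev: assumes "dim_vec u = dim_vec v" shows "vnorm u - vnorm v \<le> vnorm (u + v)"
proof -
  have "u = (u + v) - v" using assms by (auto simp: vec_eq_iff)
  then have "vnorm u \<le> vnorm (u + v) + vnorm v" using vnorm_minus[of "u+v" v] assms by simp
  then show ?thesis by simp
qed

lemma vnorm_zero_iff: "vnorm v = 0 \<longleftrightarrow> v = 0\<^sub>v (dim_vec v)"
proof -
  have "vnorm v = 0 \<longleftrightarrow> (\<forall>i\<in>{..<dim_vec v}. v $ i = 0)"
    unfolding vnorm_L2 by (simp add: L2_set_eq_0_iff)
  then show ?thesis by (metis index_zero_vec(1) eq_vecI index_zero_vec(2) lessThan_iff)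
qed

definition frob :: "real mat \<Rightarrow> real" where
  "frob M = sqrt (\<Sum>i<dim_row M. \<Sum>j<dim_col M. (M $$ (i,j))\<^sup>2)"

lemma frob_nonneg: "frob M \<ge> 0" unfolding frob_def by (auto intro!: sum_nonneg)

lemma frob_bound: assumes "dim_vec v = dim_col M" shows "vnorm (M *\<^sub>v v) \<le> frob M * vnorm v"
proof -
  have r: "\<bar>(M *\<^sub>v v) $ i\<bar> \<le> vnorm (row M i) * vnorm v" if "i < dim_row M" for i
    using that assms vnorm_cs[of "row M i" v] by simp
  have "(vnorm (M *\<^sub>v v))\<^sup>2 = (\<Sum>i<dim_row M. ((M *\<^sub>v v) $ i)\<^sup>2)"
    unfolding vnorm_def by (simp add: sum_nonneg)
  also have "\<dots> \<le> (\<Sum>i<dim_row M. (vnorm (row M i))\<^sup>2 * (vnorm v)\<^sup>2)"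
  proof (rule sum_mono)
    fix i assume "i \<in> {..<dim_row M}"
    then have "\<bar>(M *\<^sub>v v) $ i\<bar>\<^sup>2 \<le> (vnorm (row M i) * vnorm v)\<^sup>2"
      using r by (intro power_mono) auto
    then show "((M *\<^sub>v v) $ i)\<^sup>2 \<le> (vnorm (row M i))\<^sup>2 * (vnorm v)\<^sup>2"
      by (simp add: power_mult_distrib)
  qed
  also have "\<dots> = (\<Sum>i<dim_row M. (vnorm (row M i))\<^sup>2) * (vnorm v)\<^sup>2"
    by (simp add: sum_distrib_right)
  also have "(\<Sum>i<dim_row M. (vnorm (row M i))\<^sup>2) = (frob M)\<^sup>2"
    unfolding frob_def vnorm_def by (simp add: sum_nonneg)
  finally have "(vnorm (M *\<^sub>v v))\<^sup>2 \<le> (frob M * vnorm v)\<^sup>2" by (simp add: power_mult_distrib)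
  moreover have "frob M \<ge> 0" unfolding frob_def by (auto intro!: sum_nonneg)
  ultimately show ?thesis
    using power2_le_imp_le vnorm_nonneg by (metis mult_nonneg_nonneg)
qed


lemma vnorm_diff_sq: assumes "dim_vec a = dim_vec b"
  shows "(vnorm (a - t \<cdot>\<^sub>v b))\<^sup>2 = (vnorm a)\<^sup>2 - 2 * t * (a \<bullet> b) + t\<^sup>2 * (vnorm b)\<^sup>2"
proof -
  have "(vnorm (a - t \<cdot>\<^sub>v b))\<^sup>2 = (\<Sum>i<dim_vec b. (a $ i - t * b $ i)\<^sup>2)"
    unfolding vnorm_sq using assms by (subst scalar_prod_sum) (auto simp: power2_eq_square)
  also have "\<dots> = (\<Sum>i<dim_vec b. (a $ i)\<^sup>2 - 2 * t * (a $ i * b $ i) + t\<^sup>2 * (b $ i)\<^sup>2)"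
    by (rule sum.cong) (auto simp: power2_eq_square algebra_simps)
  also have "\<dots> = (vnorm a)\<^sup>2 - 2 * t * (a \<bullet> b) + t\<^sup>2 * (vnorm b)\<^sup>2"
    unfolding vnorm_sq using assms
    by (simp add: scalar_prod_sum sum.distrib sum_subtractf sum_distrib_left power2_eq_square)
  finally show ?thesis .
qed



lemma rayleigh_eigen:
  fixes A :: "real mat"
  assumes A: "A \<in> carrier_mat p p" and p: "0 < p"
  defines "\<mu> \<equiv> Inf {(vnorm (A *\<^sub>v x))\<^sup>2 | x. x \<in> carrier_vec p \<and> vnorm x = 1}"
  shows "eigenvalue (transpose_mat A * A) \<mu>" and "\<And>x. x \<in> carrier_vec p \<Longrightarrow> \<mu> * (vnorm x)\<^sup>2 \<le> (vnorm (A *\<^sub>v x))\<^sup>2"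
    and "\<mu> \<ge> 0"
proof -
  let ?S = "{(vnorm (A *\<^sub>v x))\<^sup>2 | x. x \<in> carrier_vec p \<and> vnorm x = 1}"
  have ne: "?S \<noteq> {}"
  proof -
    have "(\<Sum>i<p. ((unit_vec p 0 :: real vec) $ i)\<^sup>2) = (\<Sum>i<p. if i = 0 then 1 else 0)"
      by (rule sum.cong) (auto simp: unit_vec_def)
    also have "\<dots> = 1" using p by simp
    finally have "vnorm (unit_vec p 0) = 1"
      unfolding vnorm_def by simp
    then show ?thesis by (auto intro!: exI[of _ "unit_vec p 0"])
  qed
  have bdd: "bdd_below ?S" by (auto intro!: bdd_belowI[of _ 0])
  have low: "\<mu> \<le> (vnorm (A *\<^sub>v x))\<^sup>2" if "x \<in> carrier_vec p" "vnorm x = 1" for x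
    unfolding \<mu>_def using that bdd by (auto intro!: cInf_lower)
  show mu0: "\<mu> \<ge> 0" unfolding \<mu>_def using ne by (auto intro!: cInf_greatest)
  show gen: "\<mu> * (vnorm x)\<^sup>2 \<le> (vnorm (A *\<^sub>v x))\<^sup>2" if x: "x \<in> carrier_vec p" for x
  proof (cases "vnorm x = 0")
    case True then show ?thesis by simp
  next
    case False
    then have nx: "vnorm x > 0" using vnorm_nonneg[of x] by simp
    let ?y = "(1 / vnorm x) \<cdot>\<^sub>v x"
    have "?y \<in> carrier_vec p" using x by simp
    moreover have "vnorm ?y = 1" using nx by (simp add: vnorm_smult)
    ultimately have "\<mu> \<le> (vnorm (A *\<^sub>v ?y))\<^sup>2" by (rule low)
    also have "A *\<^sub>v ?y = (1 / vnorm x) \<cdot>\<^sub>v (A *\<^sub>v x)" using A x by (simp add: mult_mat_vec)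
    also have "(vnorm \<dots>)\<^sup>2 = (vnorm (A *\<^sub>v x))\<^sup>2 / (vnorm x)\<^sup>2"
      using nx by (simp add: vnorm_smult power_divide)
    finally show ?thesis using nx by (simp add: field_simps)
  qed
  let ?B = "transpose_mat A * A"
  have B: "?B \<in> carrier_mat p p" using A by auto
  let ?C = "char_matrix ?B \<mu>"
  have C: "?C \<in> carrier_mat p p" using B by simp
  define w where "w x = transpose_mat A *\<^sub>v (A *\<^sub>v x) - \<mu> \<cdot>\<^sub>v x" for x
  have Cw: "?C *\<^sub>v x = w x" if x: "x \<in> carrier_vec p" for x
  proof -
    have "?C *\<^sub>v x = ?B *\<^sub>v x + ((-\<mu>) \<cdot>\<^sub>m 1\<^sub>m p) *\<^sub>v x"
      unfolding char_matrix_def using A B x by (subst add_mult_distrib_mat_vec[of _ p p]) auto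
    also have "((-\<mu>) \<cdot>\<^sub>m 1\<^sub>m p) *\<^sub>v x = (-\<mu>) \<cdot>\<^sub>v x" using x
      by (intro eq_vecI) (auto simp: row_smult row_one scalar_prod_left_unit)
    also have "?B *\<^sub>v x = transpose_mat A *\<^sub>v (A *\<^sub>v x)" using A x by simp
    finally show ?thesis unfolding w_def using A x by (auto simp: vec_eq_iff)
  qed
  have wc: "w x \<in> carrier_vec p" if "x \<in> carrier_vec p" for x using that A unfolding w_def by simp
  have key: "(vnorm (w x))\<^sup>2 \<le> ((frob A)\<^sup>2 + 1) * ((vnorm (A *\<^sub>v x))\<^sup>2 - \<mu> * (vnorm x)\<^sup>2)"
    if x: "x \<in> carrier_vec p" for x
  proof -
    let ?F = "(frob A)\<^sup>2 + 1"
    define t where "t = 1 / ?F"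
    have F: "?F > 0" using zero_le_power2[of "frob A"] by linarith
    have wcx: "w x \<in> carrier_vec p" using wc x .
    have Ax: "A *\<^sub>v x \<in> carrier_vec p" "A *\<^sub>v w x \<in> carrier_vec p" using A x wcx by auto
    have dot: "(A *\<^sub>v x) \<bullet> (A *\<^sub>v w x) - \<mu> * (x \<bullet> w x) = w x \<bullet> w x"
    proof -
      have "(A *\<^sub>v x) \<bullet> (A *\<^sub>v w x) = (transpose_mat A *\<^sub>v (A *\<^sub>v x)) \<bullet> w x"
        using transpose_vec_mult_scalar[OF A wcx Ax(1)] by simp
      moreover have "w x \<bullet> w x = (transpose_mat A *\<^sub>v (A *\<^sub>v x)) \<bullet> w x - \<mu> * (x \<bullet> w x)"
        unfolding w_def using A x wcx
        by (simp add: minus_scalar_prod_distrib[of _ p] )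
      ultimately show ?thesis by simp
    qed
    have q0: "0 \<le> (vnorm (A *\<^sub>v (x - t \<cdot>\<^sub>v w x)))\<^sup>2 - \<mu> * (vnorm (x - t \<cdot>\<^sub>v w x))\<^sup>2"
      using gen[of "x - t \<cdot>\<^sub>v w x"] x wcx by simp
    have e1: "A *\<^sub>v (x - t \<cdot>\<^sub>v w x) = A *\<^sub>v x - t \<cdot>\<^sub>v (A *\<^sub>v w x)"
      using A x wcx by (simp add: mult_minus_distrib_mat_vec mult_mat_vec)
    have qw: "(vnorm (A *\<^sub>v w x))\<^sup>2 - \<mu> * (vnorm (w x))\<^sup>2 \<le> ?F * (vnorm (w x))\<^sup>2"
    proof -
      have "vnorm (A *\<^sub>v w x) \<le> frob A * vnorm (w x)" using A wcx by (intro frob_bound) auto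
      then have "(vnorm (A *\<^sub>v w x))\<^sup>2 \<le> (frob A * vnorm (w x))\<^sup>2"
        by (intro power_mono vnorm_nonneg)
      then show ?thesis using mu0 by (simp add: power_mult_distrib algebra_simps add_increasing)
    qed
    have "0 \<le> (vnorm (A *\<^sub>v x))\<^sup>2 - 2 * t * ((A *\<^sub>v x) \<bullet> (A *\<^sub>v w x)) + t\<^sup>2 * (vnorm (A *\<^sub>v w x))\<^sup>2
       - \<mu> * ((vnorm x)\<^sup>2 - 2 * t * (x \<bullet> w x) + t\<^sup>2 * (vnorm (w x))\<^sup>2)"
      using q0 unfolding e1 using Ax x wcx by (simp add: vnorm_diff_sq)
    also have "\<dots> = ((vnorm (A *\<^sub>v x))\<^sup>2 - \<mu> * (vnorm x)\<^sup>2) - 2 * t * (w x \<bullet> w x)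
        + t\<^sup>2 * ((vnorm (A *\<^sub>v w x))\<^sup>2 - \<mu> * (vnorm (w x))\<^sup>2)"
      using dot by (simp add: algebra_simps)
    also have "\<dots> \<le> ((vnorm (A *\<^sub>v x))\<^sup>2 - \<mu> * (vnorm x)\<^sup>2) - 2 * t * (vnorm (w x))\<^sup>2
        + t\<^sup>2 * (?F * (vnorm (w x))\<^sup>2)"
      using qw by (simp add: vnorm_sq[symmetric] mult_left_mono)
    also have "\<dots> = ((vnorm (A *\<^sub>v x))\<^sup>2 - \<mu> * (vnorm x)\<^sup>2) - t * (vnorm (w x))\<^sup>2"
    proof -
      have tF: "t\<^sup>2 * ?F = t" unfolding t_def using F by (simp add: power2_eq_square)
      have "t\<^sup>2 * (?F * (vnorm (w x))\<^sup>2) = t * (vnorm (w x))\<^sup>2" using tF by (metis mult.assoc)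
      then show ?thesis by linarith
    qed
    finally have "t * (vnorm (w x))\<^sup>2 \<le> (vnorm (A *\<^sub>v x))\<^sup>2 - \<mu> * (vnorm x)\<^sup>2" by linarith
    then have "?F * (t * (vnorm (w x))\<^sup>2) \<le> ?F * ((vnorm (A *\<^sub>v x))\<^sup>2 - \<mu> * (vnorm x)\<^sup>2)"
      using F by (intro mult_left_mono) auto
    moreover have "?F * (t * (vnorm (w x))\<^sup>2) = (vnorm (w x))\<^sup>2" unfolding t_def using F by simp
    ultimately show ?thesis by simp
  qed
  show "eigenvalue ?B \<mu>"
  proof (rule ccontr)
    assume "\<not> eigenvalue ?B \<mu>"
    then have "det ?C \<noteq> 0" using eigenvalue_det[OF B] by simp
    then obtain D where D: "D \<in> carrier_mat p p" "D * ?C = 1\<^sub>m p"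
      using mat_inverse[OF C] by (metis det_non_zero_imp_unit[OF C] option.exhaust)
    define G where "G = (frob D)\<^sup>2 * ((frob A)\<^sup>2 + 1)"
    have G0: "G \<ge> 0" unfolding G_def by simp
    define \<delta> where "\<delta> = 1 / (G + 1)"
    have d0: "\<delta> > 0" unfolding \<delta>_def using G0 by simp
    have "\<exists>v \<in> ?S. v < \<mu> + \<delta>" unfolding \<mu>_def
      using cInf_less_iff[OF ne bdd, of "Inf ?S + \<delta>"] d0 by simp
    then obtain x where x: "x \<in> carrier_vec p" "vnorm x = 1" "(vnorm (A *\<^sub>v x))\<^sup>2 < \<mu> + \<delta>" by auto
    have "x = D *\<^sub>v (?C *\<^sub>v x)" using D C x by (simp add: assoc_mult_mat_vec[symmetric])
    then have "vnorm x \<le> frob D * vnorm (w x)" using frob_bound[of "?C *\<^sub>v x" D] D C x Cw[OF x(1)] wc[OF x(1)]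
      by simp
    then have "1 \<le> (frob D * vnorm (w x))\<^sup>2" using x(2) by (simp add: one_le_power)
    also have "\<dots> = (frob D)\<^sup>2 * (vnorm (w x))\<^sup>2" by (simp add: power_mult_distrib)
    also have "\<dots> \<le> (frob D)\<^sup>2 * (((frob A)\<^sup>2 + 1) * ((vnorm (A *\<^sub>v x))\<^sup>2 - \<mu> * (vnorm x)\<^sup>2))"
      by (intro mult_left_mono key x) simp
    also have "\<dots> \<le> (frob D)\<^sup>2 * (((frob A)\<^sup>2 + 1) * \<delta>)"
      using x by (intro mult_left_mono) (auto simp: add_pos_nonneg)
    also have "\<dots> = G / (G + 1)" unfolding G_def \<delta>_def by simp
    also have "\<dots> < 1" using G0 by simp
    finally show False by simp
  qed
qed

lemma sigma_min_bound:
  fixes A :: "real mat"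
  assumes A: "A \<in> carrier_mat p p" and p: "0 < p" and x: "x \<in> carrier_vec p"
  shows "sigma_min A * vnorm x \<le> vnorm (A *\<^sub>v x)"
proof -
  define \<mu> where "\<mu> = Inf {(vnorm (A *\<^sub>v x))\<^sup>2 | x. x \<in> carrier_vec p \<and> vnorm x = 1}"
  note R = rayleigh_eigen[OF A p, folded \<mu>_def]
  let ?B = "transpose_mat A * A"
  have B: "?B \<in> carrier_mat p p" using A by auto
  have "{k. eigenvalue ?B k} \<subseteq> {k. poly (char_poly ?B) k = 0}"
    using eigenvalue_root_char_poly[OF B] by auto
  moreover have "char_poly ?B \<noteq> 0" using degree_monic_char_poly[OF B] by auto
  ultimately have fin: "finite {k. eigenvalue ?B k}" using poly_roots_finite finite_subset by blast
  have "Min {k. eigenvalue ?B k} \<le> \<mu>" using fin R(1) by (intro Min_le) auto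
  then have "sigma_min A \<le> sqrt \<mu>" unfolding sigma_min_def by simp
  moreover have "sqrt \<mu> * vnorm x \<le> vnorm (A *\<^sub>v x)"
  proof -
    have "(sqrt \<mu> * vnorm x)\<^sup>2 \<le> (vnorm (A *\<^sub>v x))\<^sup>2" using R(2)[OF x] R(3) by (simp add: power_mult_distrib)
    then show ?thesis using vnorm_nonneg power2_le_imp_le by blast
  qed
  ultimately show ?thesis using vnorm_nonneg[of x]
    by (meson mult_right_mono order_trans)
qed


lemma minv_right:
  fixes M :: "real mat"
  assumes M: "M \<in> carrier_mat p p" and d: "det M \<noteq> 0"
  shows "M * minv M = 1\<^sub>m p" "minv M \<in> carrier_mat p p"
proof -
  have "M \<in> Units (ring_mat TYPE(real) p ())" by (rule det_non_zero_imp_unit[OF M d])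
  then obtain B where B: "mat_inverse M = Some B" using mat_inverse(1)[OF M, of "()"] by (cases "mat_inverse M") auto
  then show "M * minv M = 1\<^sub>m p" "minv M \<in> carrier_mat p p" using mat_inverse(2)[OF M B] unfolding minv_def by auto
qed

lemma minv_adj:
  fixes M :: "real mat"
  assumes M: "M \<in> carrier_mat p p"
  shows "minv M = (1 / det M) \<cdot>\<^sub>m adj_mat M"
proof (cases "det M = 0")
  case True
  have "mat_inverse M = None"
  proof (rule ccontr)
    assume "mat_inverse M \<noteq> None"
    then obtain B where B: "mat_inverse M = Some B" by auto
    from mat_inverse(2)[OF M B] have "M * B = 1\<^sub>m p" "B \<in> carrier_mat p p" by auto
    then have "det M * det B = 1" using det_mult[OF M, of B] by simp
    then show False using True by simp
  qed
  then have "minv M = 0\<^sub>m p p" unfolding minv_def using M by auto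
  moreover have "(1 / det M) \<cdot>\<^sub>m adj_mat M = 0\<^sub>m p p" using True adj_mat(1)[OF M]
    by (auto simp: eq_matI)
  ultimately show ?thesis by simp
next
  case False
  have "M \<in> Units (ring_mat TYPE(real) p ())" by (rule det_non_zero_imp_unit[OF M False])
  then obtain B where B: "mat_inverse M = Some B" using mat_inverse(1)[OF M, of "()"] by (cases "mat_inverse M") auto
  from mat_inverse(2)[OF M B] have BM: "B * M = 1\<^sub>m p" and Bc: "B \<in> carrier_mat p p" by auto
  have mB: "minv M = B" unfolding minv_def B by simp
  have adj: "adj_mat M \<in> carrier_mat p p" "M * adj_mat M = det M \<cdot>\<^sub>m 1\<^sub>m p" using adj_mat[OF M] by auto
  have "adj_mat M = (B * M) * adj_mat M" using BM adj by simp
  also have "\<dots> = B * (M * adj_mat M)" using Bc M adj by (simp add: assoc_mult_mat)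
  also have "\<dots> = det M \<cdot>\<^sub>m B" using adj Bc by (simp add: mult_smult_distrib[OF Bc one_carrier_mat])
  finally have "(1 / det M) \<cdot>\<^sub>m adj_mat M = (1 / det M) \<cdot>\<^sub>m (det M \<cdot>\<^sub>m B)" by simp
  also have "\<dots> = B" using False by (auto simp: eq_matI)
  finally show ?thesis using mB by simp
qed

lemma measurable_det:
  fixes F :: "'w \<Rightarrow> real mat"
  assumes F: "\<And>\<omega>. F \<omega> \<in> carrier_mat m m"
    and meas: "\<And>i j. i < m \<Longrightarrow> j < m \<Longrightarrow> (\<lambda>\<omega>. F \<omega> $$ (i,j)) \<in> borel_measurable M"
  shows "(\<lambda>\<omega>. det (F \<omega>)) \<in> borel_measurable M"
proof -
  have eq: "(\<lambda>\<omega>. det (F \<omega>)) = (\<lambda>\<omega>. \<Sum>\<pi>\<in>{\<pi>. \<pi> permutes {0..<m}}. signof \<pi> * (\<Prod>i=0..<m. F \<omega> $$ (i, \<pi> i)))"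
    using det_def'[OF F] by auto
  show ?thesis unfolding eq
  proof (intro borel_measurable_sum borel_measurable_times borel_measurable_const borel_measurable_prod)
    fix \<pi> i assume "\<pi> \<in> {\<pi>. \<pi> permutes {0..<m}}" "i \<in> {0..<m}"
    then have "i < m" "\<pi> i < m" using permutes_in_image by fastforce+
    then show "(\<lambda>\<omega>. F \<omega> $$ (i, \<pi> i)) \<in> borel_measurable M" by (rule meas)
  qed
qed

lemma measurable_minv_entry:
  fixes F :: "'w \<Rightarrow> real mat"
  assumes F: "\<And>\<omega>. F \<omega> \<in> carrier_mat m m"
    and meas: "\<And>i j. i < m \<Longrightarrow> j < m \<Longrightarrow> (\<lambda>\<omega>. F \<omega> $$ (i,j)) \<in> borel_measurable M"
    and ij: "i < m" "j < m"
  shows "(\<lambda>\<omega>. minv (F \<omega>) $$ (i,j)) \<in> borel_measurable M"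
proof -
  have eq: "minv (F \<omega>) $$ (i,j) = (-1)^(j+i) * det (mat_delete (F \<omega>) j i) / det (F \<omega>)" for \<omega>
    unfolding minv_adj[OF F] using ij F[of \<omega>] by (simp add: adj_mat_def cofactor_def)
  have md: "(\<lambda>\<omega>. det (mat_delete (F \<omega>) j i)) \<in> borel_measurable M"
  proof (rule measurable_det[of _ "m - 1"])
    show "mat_delete (F \<omega>) j i \<in> carrier_mat (m - 1) (m - 1)" for \<omega> using mat_delete_carrier[OF F] .
    fix a b assume ab: "a < m - 1" "b < m - 1"
    have "(\<lambda>\<omega>. F \<omega> $$ (if a < j then a else Suc a, if b < i then b else Suc b)) \<in> borel_measurable M"
      using ab by (intro meas) auto
    moreover have "mat_delete (F \<omega>) j i $$ (a, b) = F \<omega> $$ (if a < j then a else Suc a, if b < i then b else Suc b)" for \<omega>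
      unfolding mat_delete_def using ab F[of \<omega>] by auto
    ultimately show "(\<lambda>\<omega>. mat_delete (F \<omega>) j i $$ (a, b)) \<in> borel_measurable M" by simp
  qed
  show ?thesis unfolding eq using md measurable_det[OF F meas] by measurable
qed


lemma gauss_prob: "0 < \<sigma> \<Longrightarrow> prob_space (gauss \<sigma>)"
  unfolding gauss_def by (rule prob_space_normal_density)

lemma sets_gauss[simp]: "sets (gauss \<sigma>) = sets borel"
  unfolding gauss_def by simp

lemma comp_meas: "k \<in> I \<Longrightarrow> (\<lambda>x. x k) \<in> borel_measurable (PiM I (\<lambda>_. gauss \<sigma>))"
proof -
  assume k: "k \<in> I"
  have "(\<lambda>x. x k) \<in> measurable (PiM I (\<lambda>_. gauss \<sigma>)) (gauss \<sigma>)"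
    by (rule measurable_component_singleton[OF k])
  also have "measurable (PiM I (\<lambda>_. gauss \<sigma>)) (gauss \<sigma>) = measurable (PiM I (\<lambda>_. gauss \<sigma>)) borel"
    by (rule measurable_cong_sets) auto
  finally show ?thesis .
qed

lemma gm: "borel_measurable (gauss \<sigma>) = borel_measurable borel"
  by (rule measurable_cong_sets) auto

lemma nd_int1: assumes "0 < \<sigma>" shows "(\<integral>\<^sup>+x. ennreal (normal_density \<mu> \<sigma> x) \<partial>lborel) = 1"
proof -
  interpret prob_space "density lborel (normal_density \<mu> \<sigma>)" using assms by (rule prob_space_normal_density)
  have "emeasure (density lborel (normal_density \<mu> \<sigma>)) (space lborel) = 1"
    using emeasure_space_1 by simp
  then show ?thesis by (simp add: emeasure_density)
qed

lemma gauss_mgf: assumes s: "0 < \<sigma>"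
  shows "(\<integral>\<^sup>+x. ennreal (exp (a * x)) \<partial>gauss \<sigma>) = ennreal (exp (a\<^sup>2 * \<sigma>\<^sup>2 / 2))"
proof -
  have pt: "normal_density 0 \<sigma> x * exp (a * x) = exp (a\<^sup>2 * \<sigma>\<^sup>2 / 2) * normal_density (a * \<sigma>\<^sup>2) \<sigma> x" for x
  proof -
    have "-(x - 0)\<^sup>2 / (2 * \<sigma>\<^sup>2) + a * x = a\<^sup>2 * \<sigma>\<^sup>2 / 2 + (-(x - a * \<sigma>\<^sup>2)\<^sup>2 / (2 * \<sigma>\<^sup>2))"
      using s by (simp add: field_simps power2_eq_square)
    then have "exp (-(x - 0)\<^sup>2 / (2 * \<sigma>\<^sup>2)) * exp (a * x) = exp (a\<^sup>2 * \<sigma>\<^sup>2 / 2) * exp (-(x - a * \<sigma>\<^sup>2)\<^sup>2 / (2 * \<sigma>\<^sup>2))"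
      by (metis exp_add)
    then show ?thesis unfolding normal_density_def by (simp add: algebra_simps)
  qed
  have "(\<integral>\<^sup>+x. ennreal (exp (a * x)) \<partial>gauss \<sigma>) = (\<integral>\<^sup>+x. ennreal (normal_density 0 \<sigma> x) * ennreal (exp (a * x)) \<partial>lborel)"
    unfolding gauss_def by (subst nn_integral_density) auto
  also have "\<dots> = (\<integral>\<^sup>+x. ennreal (exp (a\<^sup>2 * \<sigma>\<^sup>2 / 2)) * ennreal (normal_density (a * \<sigma>\<^sup>2) \<sigma> x) \<partial>lborel)"
    by (intro nn_integral_cong) (simp add: ennreal_mult'[symmetric] pt)
  also have "\<dots> = ennreal (exp (a\<^sup>2 * \<sigma>\<^sup>2 / 2)) * (\<integral>\<^sup>+x. ennreal (normal_density (a * \<sigma>\<^sup>2) \<sigma> x) \<partial>lborel)"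
    by (rule nn_integral_cmult) simp
  also have "\<dots> = ennreal (exp (a\<^sup>2 * \<sigma>\<^sup>2 / 2))" using nd_int1[OF s] by simp
  finally show ?thesis .
qed

lemma gauss_mgf_sq: assumes s: "0 < \<sigma>"
  shows "(\<integral>\<^sup>+x. ennreal (exp (x\<^sup>2 / (4 * \<sigma>\<^sup>2))) \<partial>gauss \<sigma>) = ennreal (sqrt 2)"
proof -
  have pt: "normal_density 0 \<sigma> x * exp (x\<^sup>2 / (4 * \<sigma>\<^sup>2)) = sqrt 2 * normal_density 0 (sqrt 2 * \<sigma>) x" for x
  proof -
    have "-(x - 0)\<^sup>2 / (2 * \<sigma>\<^sup>2) + x\<^sup>2 / (4 * \<sigma>\<^sup>2) = -(x - 0)\<^sup>2 / (2 * (sqrt 2 * \<sigma>)\<^sup>2)"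
      using s by (simp add: field_simps power2_eq_square)
    then have e: "exp (-(x - 0)\<^sup>2 / (2 * \<sigma>\<^sup>2)) * exp (x\<^sup>2 / (4 * \<sigma>\<^sup>2)) = exp (-(x - 0)\<^sup>2 / (2 * (sqrt 2 * \<sigma>)\<^sup>2))"
      by (metis exp_add)
    have c: "1 / sqrt (2 * pi * \<sigma>\<^sup>2) = sqrt 2 * (1 / sqrt (2 * pi * (sqrt 2 * \<sigma>)\<^sup>2))"
    proof -
      have "sqrt (2 * pi * (sqrt 2 * \<sigma>)\<^sup>2) = sqrt 2 * sqrt (2 * pi * \<sigma>\<^sup>2)"
        by (simp add: power_mult_distrib real_sqrt_mult[symmetric] mult.commute mult.left_commute)
      then show ?thesis using s by (simp add: field_simps)
    qed
    show ?thesis unfolding normal_density_def using e c by (metis (no_types, lifting) mult.assoc mult.commute)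
  qed
  have "(\<integral>\<^sup>+x. ennreal (exp (x\<^sup>2 / (4 * \<sigma>\<^sup>2))) \<partial>gauss \<sigma>) = (\<integral>\<^sup>+x. ennreal (normal_density 0 \<sigma> x) * ennreal (exp (x\<^sup>2 / (4 * \<sigma>\<^sup>2))) \<partial>lborel)"
    unfolding gauss_def by (subst nn_integral_density) auto
  also have "\<dots> = (\<integral>\<^sup>+x. ennreal (sqrt 2) * ennreal (normal_density 0 (sqrt 2 * \<sigma>) x) \<partial>lborel)"
    by (intro nn_integral_cong) (simp add: ennreal_mult'[symmetric] pt)
  also have "\<dots> = ennreal (sqrt 2) * (\<integral>\<^sup>+x. ennreal (normal_density 0 (sqrt 2 * \<sigma>) x) \<partial>lborel)"
    by (rule nn_integral_cmult) simp
  also have "\<dots> = ennreal (sqrt 2)" using nd_int1[of "sqrt 2 * \<sigma>"] s by simp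
  finally show ?thesis .
qed

lemma chernoff:
  assumes f: "f \<in> borel_measurable M" and th: "0 < \<theta>"
  shows "emeasure M {x \<in> space M. t \<le> f x} \<le> ennreal (exp (- \<theta> * t)) * (\<integral>\<^sup>+x. ennreal (exp (\<theta> * f x)) \<partial>M)"
proof -
  have "{x \<in> space M. t \<le> f x} = {x \<in> space M. 1 \<le> ennreal (exp (- \<theta> * t)) * ennreal (exp (\<theta> * f x))}"
  proof -
    have "t \<le> f x \<longleftrightarrow> 1 \<le> exp (- \<theta> * t) * exp (\<theta> * f x)" for x
    proof -
      have "exp (- \<theta> * t) * exp (\<theta> * f x) = exp (\<theta> * (f x - t))" by (simp add: exp_add[symmetric] algebra_simps)
      moreover have "1 \<le> exp (\<theta> * (f x - t)) \<longleftrightarrow> 0 \<le> \<theta> * (f x - t)" by simp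
      ultimately show ?thesis using th by (simp add: zero_le_mult_iff)
    qed
    then show ?thesis by (auto simp: ennreal_mult'[symmetric])
  qed
  also have "emeasure M \<dots> \<le> ennreal (exp (- \<theta> * t)) * (\<integral>\<^sup>+x. ennreal (exp (\<theta> * f x)) * indicator (space M) x \<partial>M)"
    by (rule nn_integral_Markov_inequality) (use f in auto)
  also have "(\<integral>\<^sup>+x. ennreal (exp (\<theta> * f x)) * indicator (space M) x \<partial>M) = (\<integral>\<^sup>+x. ennreal (exp (\<theta> * f x)) \<partial>M)"
    by (intro nn_integral_cong) auto
  finally show ?thesis .
qed

lemma gauss_lin_tail:
  fixes I :: "'i set"
  assumes I: "finite I" and s: "0 < \<sigma>" and S: "0 < (\<Sum>k\<in>I. (c k)\<^sup>2)" and t: "0 \<le> t"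
  shows "emeasure (PiM I (\<lambda>_. gauss \<sigma>)) {x \<in> space (PiM I (\<lambda>_. gauss \<sigma>)). t \<le> (\<Sum>k\<in>I. c k * x k)}
     \<le> ennreal (exp (- t\<^sup>2 / (2 * \<sigma>\<^sup>2 * (\<Sum>k\<in>I. (c k)\<^sup>2))))"
proof -
  let ?S = "\<Sum>k\<in>I. (c k)\<^sup>2"
  interpret product_prob_space "\<lambda>_. gauss \<sigma>" I by (rule product_prob_spaceI) (rule gauss_prob[OF s])
  show ?thesis
  proof (cases "t = 0")
    case True
    interpret P: prob_space "PiM I (\<lambda>_. gauss \<sigma>)" by (rule prob_space_PiM) (rule gauss_prob[OF s])
    show ?thesis using True by (simp add: P.emeasure_le_1)
  next
    case False
    then have t0: "t > 0" using t by simp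
    define \<theta> where "\<theta> = t / (\<sigma>\<^sup>2 * ?S)"
    have th: "\<theta> > 0" unfolding \<theta>_def using t0 s S by simp
    have "emeasure (PiM I (\<lambda>_. gauss \<sigma>)) {x \<in> space (PiM I (\<lambda>_. gauss \<sigma>)). t \<le> (\<Sum>k\<in>I. c k * x k)}
      \<le> ennreal (exp (- \<theta> * t)) * (\<integral>\<^sup>+x. ennreal (exp (\<theta> * (\<Sum>k\<in>I. c k * x k))) \<partial>PiM I (\<lambda>_. gauss \<sigma>))"
      by (rule chernoff[OF _ th]) (auto intro!: borel_measurable_sum borel_measurable_times comp_meas)
    also have "(\<integral>\<^sup>+x. ennreal (exp (\<theta> * (\<Sum>k\<in>I. c k * x k))) \<partial>PiM I (\<lambda>_. gauss \<sigma>))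
       = (\<integral>\<^sup>+x. (\<Prod>k\<in>I. ennreal (exp ((\<theta> * c k) * x k))) \<partial>PiM I (\<lambda>_. gauss \<sigma>))"
      using I by (intro nn_integral_cong) (simp add: prod_ennreal exp_sum sum_distrib_left mult.assoc)
    also have "\<dots> = (\<Prod>k\<in>I. \<integral>\<^sup>+y. ennreal (exp ((\<theta> * c k) * y)) \<partial>gauss \<sigma>)"
      by (rule product_nn_integral_prod[OF I]) (unfold gm, measurable)
    also have "\<dots> = (\<Prod>k\<in>I. ennreal (exp ((\<theta> * c k)\<^sup>2 * \<sigma>\<^sup>2 / 2)))"
      by (intro prod.cong refl gauss_mgf[OF s])
    also have "\<dots> = ennreal (exp (\<theta>\<^sup>2 * \<sigma>\<^sup>2 * ?S / 2))"
    proof -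
      have "(\<Prod>k\<in>I. exp ((\<theta> * c k)\<^sup>2 * \<sigma>\<^sup>2 / 2)) = exp (\<Sum>k\<in>I. (\<theta> * c k)\<^sup>2 * \<sigma>\<^sup>2 / 2)"
        using exp_sum[OF I, of "\<lambda>k. (\<theta> * c k)\<^sup>2 * \<sigma>\<^sup>2 / 2"] by simp
      also have "(\<Sum>k\<in>I. (\<theta> * c k)\<^sup>2 * \<sigma>\<^sup>2 / 2) = \<theta>\<^sup>2 * \<sigma>\<^sup>2 * ?S / 2"
        by (simp add: sum_divide_distrib[symmetric] sum_distrib_left sum_distrib_right power_mult_distrib algebra_simps)
      finally show ?thesis by (simp add: prod_ennreal)
    qed
    also have "ennreal (exp (- \<theta> * t)) * ennreal (exp (\<theta>\<^sup>2 * \<sigma>\<^sup>2 * ?S / 2)) = ennreal (exp (- \<theta> * t + \<theta>\<^sup>2 * \<sigma>\<^sup>2 * ?S / 2))"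
      by (simp add: ennreal_mult'[symmetric] exp_add[symmetric])
    also have "- \<theta> * t + \<theta>\<^sup>2 * \<sigma>\<^sup>2 * ?S / 2 = - t\<^sup>2 / (2 * \<sigma>\<^sup>2 * ?S)"
      unfolding \<theta>_def using s S by (simp add: field_simps power2_eq_square)
    finally show ?thesis .
  qed
qed

lemma gauss_sq_tail:
  fixes I :: "'i set"
  assumes I: "finite I" and s: "0 < \<sigma>"
  shows "emeasure (PiM I (\<lambda>_. gauss \<sigma>)) {x \<in> space (PiM I (\<lambda>_. gauss \<sigma>)). r \<le> (\<Sum>k\<in>I. (x k)\<^sup>2)}
     \<le> ennreal (sqrt 2 ^ card I * exp (- r / (4 * \<sigma>\<^sup>2)))"
proof -
  interpret product_prob_space "\<lambda>_. gauss \<sigma>" I by (rule product_prob_spaceI) (rule gauss_prob[OF s])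
  define \<theta> where "\<theta> = 1 / (4 * \<sigma>\<^sup>2)"
  have th: "\<theta> > 0" unfolding \<theta>_def using s by simp
  have "emeasure (PiM I (\<lambda>_. gauss \<sigma>)) {x \<in> space (PiM I (\<lambda>_. gauss \<sigma>)). r \<le> (\<Sum>k\<in>I. (x k)\<^sup>2)}
      \<le> ennreal (exp (- \<theta> * r)) * (\<integral>\<^sup>+x. ennreal (exp (\<theta> * (\<Sum>k\<in>I. (x k)\<^sup>2))) \<partial>PiM I (\<lambda>_. gauss \<sigma>))"
    by (rule chernoff[OF _ th]) (auto intro!: borel_measurable_sum borel_measurable_power comp_meas)
  also have "(\<integral>\<^sup>+x. ennreal (exp (\<theta> * (\<Sum>k\<in>I. (x k)\<^sup>2))) \<partial>PiM I (\<lambda>_. gauss \<sigma>))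
       = (\<integral>\<^sup>+x. (\<Prod>k\<in>I. ennreal (exp ((x k)\<^sup>2 / (4 * \<sigma>\<^sup>2)))) \<partial>PiM I (\<lambda>_. gauss \<sigma>))"
    using I by (intro nn_integral_cong) (simp add: prod_ennreal exp_sum sum_distrib_left \<theta>_def)
  also have "\<dots> = (\<Prod>k\<in>I. \<integral>\<^sup>+y. ennreal (exp (y\<^sup>2 / (4 * \<sigma>\<^sup>2))) \<partial>gauss \<sigma>)"
    by (rule product_nn_integral_prod[OF I]) (unfold gm, measurable)
  also have "\<dots> = (\<Prod>k\<in>I. ennreal (sqrt 2))"
    by (intro prod.cong refl gauss_mgf_sq[OF s])
  also have "\<dots> = ennreal (sqrt 2 ^ card I)" by (simp add: ennreal_power)
  also have "ennreal (exp (- \<theta> * r)) * ennreal (sqrt 2 ^ card I) = ennreal (sqrt 2 ^ card I * exp (- r / (4 * \<sigma>\<^sup>2)))"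
    by (simp add: ennreal_mult'[symmetric] \<theta>_def mult.commute)
  finally show ?thesis .
qed


definition netv :: "nat \<Rightarrow> real vec set" where
  "netv p = {z \<in> carrier_vec p. (\<forall>i<p. z $ i \<in> \<int>) \<and> (vnorm z)\<^sup>2 \<le> 25 * real p / 4}"

definition bf :: "real mat \<Rightarrow> real vec \<Rightarrow> real vec \<Rightarrow> real" where
  "bf N u v = u \<bullet> (N *\<^sub>v v)"

lemma bf_add_left: "N \<in> carrier_mat p p \<Longrightarrow> u1 \<in> carrier_vec p \<Longrightarrow> u2 \<in> carrier_vec p \<Longrightarrow> v \<in> carrier_vec p
  \<Longrightarrow> bf N (u1 + u2) v = bf N u1 v + bf N u2 v"
  unfolding bf_def by (rule add_scalar_prod_distrib[of _ p]) auto

lemma bf_add_right: "N \<in> carrier_mat p p \<Longrightarrow> u \<in> carrier_vec p \<Longrightarrow> v1 \<in> carrier_vec p \<Longrightarrow> v2 \<in> carrier_vec p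
  \<Longrightarrow> bf N u (v1 + v2) = bf N u v1 + bf N u v2"
  unfolding bf_def by (simp add: mult_add_distrib_mat_vec[of _ p p] scalar_prod_add_distrib[of _ p])

lemma bf_smult_left: "N \<in> carrier_mat p p \<Longrightarrow> u \<in> carrier_vec p \<Longrightarrow> v \<in> carrier_vec p
  \<Longrightarrow> bf N (a \<cdot>\<^sub>v u) v = a * bf N u v"
  unfolding bf_def by simp

lemma bf_smult_right: "N \<in> carrier_mat p p \<Longrightarrow> u \<in> carrier_vec p \<Longrightarrow> v \<in> carrier_vec p
  \<Longrightarrow> bf N u (a \<cdot>\<^sub>v v) = a * bf N u v"
  unfolding bf_def by (simp add: mult_mat_vec[of _ p p])

lemma bf_bound: "N \<in> carrier_mat p p \<Longrightarrow> u \<in> carrier_vec p \<Longrightarrow> v \<in> carrier_vec p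
  \<Longrightarrow> bf N u v \<le> frob N * (vnorm u * vnorm v)"
proof -
  assume N: "N \<in> carrier_mat p p" and u: "u \<in> carrier_vec p" and v: "v \<in> carrier_vec p"
  have "bf N u v \<le> vnorm u * vnorm (N *\<^sub>v v)" unfolding bf_def
    using vnorm_cs[of u "N *\<^sub>v v"] N u v by simp
  also have "\<dots> \<le> vnorm u * (frob N * vnorm v)"
    using frob_bound[of v N] N v by (intro mult_left_mono vnorm_nonneg) auto
  finally show ?thesis by (simp add: algebra_simps)
qed

lemma vnorm_sum_bound: assumes "\<And>i. i < dim_vec v \<Longrightarrow> \<bar>v $ i\<bar> \<le> c"
  shows "(vnorm v)\<^sup>2 \<le> real (dim_vec v) * c\<^sup>2"
proof -
  have "(vnorm v)\<^sup>2 = (\<Sum>i<dim_vec v. (v $ i)\<^sup>2)" unfolding vnorm_def by (simp add: sum_nonneg)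
  also have "\<dots> \<le> (\<Sum>i<dim_vec v. c\<^sup>2)"
  proof (rule sum_mono)
    fix i assume "i \<in> {..<dim_vec v}"
    then have "\<bar>v $ i\<bar> \<le> c" using assms by auto
    then have "\<bar>v $ i\<bar>\<^sup>2 \<le> c\<^sup>2" by (intro power_mono) auto
    then show "(v $ i)\<^sup>2 \<le> c\<^sup>2" by simp
  qed
  finally show ?thesis by simp
qed

lemma rounding:
  assumes u: "u \<in> carrier_vec p" and un: "vnorm u \<le> 1" and p: "0 < p"
  defines "lam \<equiv> 2 * sqrt (real p)"
  defines "z \<equiv> vec p (\<lambda>i. real_of_int (round (lam * u $ i)))"
  shows "z \<in> netv p" "vnorm (u - (1 / lam) \<cdot>\<^sub>v z) \<le> 1/4" "vnorm ((1 / lam) \<cdot>\<^sub>v z) \<le> 5/4"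
proof -
  have lam: "lam > 0" unfolding lam_def using p by simp
  have zc: "z \<in> carrier_vec p" unfolding z_def by simp
  have d: "vnorm (z - lam \<cdot>\<^sub>v u) \<le> sqrt (real p) / 2"
  proof -
    have "(vnorm (z - lam \<cdot>\<^sub>v u))\<^sup>2 \<le> real (dim_vec (z - lam \<cdot>\<^sub>v u)) * (1/2)\<^sup>2"
    proof (rule vnorm_sum_bound)
      fix i assume "i < dim_vec (z - lam \<cdot>\<^sub>v u)"
      then have i: "i < p" using zc u by simp
      show "\<bar>(z - lam \<cdot>\<^sub>v u) $ i\<bar> \<le> 1/2" using i u zc unfolding z_def
        using of_int_round_abs_le[of "lam * u $ i"] by simp
    qed
    also have "real (dim_vec (z - lam \<cdot>\<^sub>v u)) * (1/2)\<^sup>2 = real p * (1/2)\<^sup>2" using zc u by simp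
    also have "\<dots> = (sqrt (real p) / 2)\<^sup>2" by (simp add: power_divide)
    finally show ?thesis by (rule power2_le_imp_le) simp
  qed
  have e: "u - (1 / lam) \<cdot>\<^sub>v z = (- 1 / lam) \<cdot>\<^sub>v (z - lam \<cdot>\<^sub>v u)"
    using u zc lam by (auto simp: vec_eq_iff field_simps)
  show "vnorm (u - (1 / lam) \<cdot>\<^sub>v z) \<le> 1/4"
    unfolding e vnorm_smult using d lam unfolding lam_def using p by (simp add: field_simps)
  have zn: "vnorm z \<le> 5/2 * sqrt (real p)"
  proof -
    have "z = (z - lam \<cdot>\<^sub>v u) + lam \<cdot>\<^sub>v u" using zc u by (auto simp: vec_eq_iff)
    then have "vnorm z \<le> vnorm (z - lam \<cdot>\<^sub>v u) + vnorm (lam \<cdot>\<^sub>v u)"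
      using vnorm_add[of "z - lam \<cdot>\<^sub>v u" "lam \<cdot>\<^sub>v u"] zc u by (metis carrier_vecD index_minus_vec(2) index_smult_vec(2))
    also have "vnorm (lam \<cdot>\<^sub>v u) \<le> lam" using un lam by (simp add: vnorm_smult mult_left_le)
    finally show ?thesis using d unfolding lam_def by simp
  qed
  show "vnorm ((1 / lam) \<cdot>\<^sub>v z) \<le> 5/4"
    using zn lam unfolding vnorm_smult lam_def by (simp add: field_simps)
  have "(vnorm z)\<^sup>2 \<le> (5/2 * sqrt (real p))\<^sup>2" using zn vnorm_nonneg[of z] by (intro power_mono) auto
  also have "\<dots> = 25 * real p / 4" by (simp add: power_mult_distrib power_divide)
  finally show "z \<in> netv p" unfolding netv_def using zc unfolding z_def by auto
qed

lemma net_bound: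
  fixes N :: "real mat"
  assumes N: "N \<in> carrier_mat p p" and p: "0 < p"
    and H: "\<And>z w. z \<in> netv p \<Longrightarrow> w \<in> netv p \<Longrightarrow> bf N z w \<le> T"
    and x: "x \<in> carrier_vec p"
  shows "vnorm (N *\<^sub>v x) \<le> 4 * T / (7 * real p) * vnorm x"
proof -
  let ?B = "{bf N u v | u v. u \<in> carrier_vec p \<and> v \<in> carrier_vec p \<and> vnorm u \<le> 1 \<and> vnorm v \<le> 1}"
  define S where "S = Sup ?B"
  have ne: "?B \<noteq> {}" by (auto intro!: exI[of _ "0\<^sub>v p"] simp: vnorm_def)
  have bdd: "bdd_above ?B"
  proof (rule bdd_aboveI[of _ "frob N"])
    fix y assume "y \<in> ?B"
    then obtain u v where uv: "y = bf N u v" "u \<in> carrier_vec p" "v \<in> carrier_vec p" "vnorm u \<le> 1" "vnorm v \<le> 1" by auto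
    have "y \<le> frob N * (vnorm u * vnorm v)" using bf_bound[OF N uv(2,3)] uv(1) by simp
    also have "\<dots> \<le> frob N * 1" using uv vnorm_nonneg[of u] vnorm_nonneg[of v]
      by (intro mult_left_mono frob_nonneg) (auto intro: mult_le_one)
    finally show "y \<le> frob N" by simp
  qed
  have up: "bf N u v \<le> S" if "u \<in> carrier_vec p" "v \<in> carrier_vec p" "vnorm u \<le> 1" "vnorm v \<le> 1" for u v
    unfolding S_def using that by (intro cSup_upper bdd) auto
  have S0: "S \<ge> 0" using up[of "0\<^sub>v p" "0\<^sub>v p"] N by (simp add: vnorm_def bf_def)
  have gen: "bf N u v \<le> S * (vnorm u * vnorm v)" if u: "u \<in> carrier_vec p" and v: "v \<in> carrier_vec p" for u v
  proof (cases "vnorm u = 0 \<or> vnorm v = 0")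
    case True
    then have "u = 0\<^sub>v p \<or> v = 0\<^sub>v p" using vnorm_zero_iff u v by auto
    then have "bf N u v = 0" unfolding bf_def using N u v by (auto simp: scalar_prod_def mult_mat_vec_def)
    then show ?thesis using True by auto
  next
    case False
    then have nu: "vnorm u > 0" and nv: "vnorm v > 0" using vnorm_nonneg[of u] vnorm_nonneg[of v] by auto
    have "bf N ((1 / vnorm u) \<cdot>\<^sub>v u) ((1 / vnorm v) \<cdot>\<^sub>v v) \<le> S"
      using u v nu nv by (intro up) (auto simp: vnorm_smult)
    also have "bf N ((1 / vnorm u) \<cdot>\<^sub>v u) ((1 / vnorm v) \<cdot>\<^sub>v v) = bf N u v / (vnorm u * vnorm v)"
      using u v N by (simp add: bf_smult_left bf_smult_right)
    finally show ?thesis using nu nv by (simp add: field_simps)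
  qed
  define lam where "lam = 2 * sqrt (real p)"
  have lam: "lam > 0" unfolding lam_def using p by simp
  have step: "bf N u v \<le> T / (4 * real p) + 9/16 * S"
    if u: "u \<in> carrier_vec p" "vnorm u \<le> 1" and v: "v \<in> carrier_vec p" "vnorm v \<le> 1" for u v
  proof -
    define z where "z = vec p (\<lambda>i. real_of_int (round (lam * u $ i)))"
    define w where "w = vec p (\<lambda>i. real_of_int (round (lam * v $ i)))"
    define a where "a = (1 / lam) \<cdot>\<^sub>v z"
    define b where "b = (1 / lam) \<cdot>\<^sub>v w"
    have ru: "z \<in> netv p" "vnorm (u - a) \<le> 1/4" "vnorm a \<le> 5/4"
      using rounding[OF u p] unfolding z_def a_def lam_def by auto
    have rv: "w \<in> netv p" "vnorm (v - b) \<le> 1/4" "vnorm b \<le> 5/4"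
      using rounding[OF v p] unfolding w_def b_def lam_def by auto
    have zc: "z \<in> carrier_vec p" and wc: "w \<in> carrier_vec p" unfolding z_def w_def by auto
    have ac: "a \<in> carrier_vec p" and bc: "b \<in> carrier_vec p" unfolding a_def b_def using zc wc by auto
    have ec: "u - a \<in> carrier_vec p" "v - b \<in> carrier_vec p" using ac bc u v by auto
    have uu: "u = a + (u - a)" and vv: "v = b + (v - b)" using ac bc u v by (auto simp: vec_eq_iff)
    have "bf N u v = bf N a b + bf N a (v - b) + bf N (u - a) v"
    proof -
      have "bf N u v = bf N a v + bf N (u - a) v"
        by (subst uu) (rule bf_add_left[OF N ac ec(1) v(1)])
      also have "bf N a v = bf N a b + bf N a (v - b)"
        by (subst vv) (rule bf_add_right[OF N ac bc ec(2)])
      finally show ?thesis .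
    qed
    also have "bf N a b = (1 / lam) * ((1 / lam) * bf N z w)"
      unfolding a_def b_def using N zc wc by (simp add: bf_smult_left bf_smult_right)
    also have "\<dots> \<le> (1 / lam) * ((1 / lam) * T)"
      using H[OF ru(1) rv(1)] lam by (intro mult_left_mono) auto
    also have "(1 / lam) * ((1 / lam) * T) = T / (4 * real p)"
      unfolding lam_def by (simp add: field_simps)
    also have "bf N a (v - b) \<le> S * (5/4 * (1/4))"
    proof -
      have "bf N a (v - b) \<le> S * (vnorm a * vnorm (v - b))" by (rule gen[OF ac ec(2)])
      also have "\<dots> \<le> S * (5/4 * (1/4))"
        using ru(3) rv(2) S0 vnorm_nonneg[of a] vnorm_nonneg[of "v - b"]
        by (intro mult_left_mono mult_mono) auto
      finally show ?thesis .
    qed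
    also have "bf N (u - a) v \<le> S * (1/4 * 1)"
    proof -
      have "bf N (u - a) v \<le> S * (vnorm (u - a) * vnorm v)" by (rule gen[OF ec(1) v(1)])
      also have "\<dots> \<le> S * (1/4 * 1)"
        using ru(2) v(2) S0 vnorm_nonneg[of "u - a"] vnorm_nonneg[of v]
        by (intro mult_left_mono mult_mono) auto
      finally show ?thesis .
    qed
    finally show ?thesis by simp
  qed
  have "S \<le> T / (4 * real p) + 9/16 * S"
    unfolding S_def using ne step by (intro cSup_least) (auto simp: S_def)
  then have SB: "S \<le> 4 * T / (7 * real p)" using p by (simp add: field_simps)
  have Nx: "N *\<^sub>v x \<in> carrier_vec p" using N x by simp
  have "(vnorm (N *\<^sub>v x))\<^sup>2 = bf N (N *\<^sub>v x) x" unfolding bf_def by (simp add: vnorm_sq)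
  also have "\<dots> \<le> S * (vnorm (N *\<^sub>v x) * vnorm x)" by (rule gen[OF Nx x])
  finally have "vnorm (N *\<^sub>v x) * vnorm (N *\<^sub>v x) \<le> vnorm (N *\<^sub>v x) * (S * vnorm x)"
    by (simp add: power2_eq_square algebra_simps)
  then have "vnorm (N *\<^sub>v x) \<le> S * vnorm x"
    using vnorm_nonneg[of "N *\<^sub>v x"] vnorm_nonneg[of x] S0 by (cases "vnorm (N *\<^sub>v x) = 0") (auto simp: mult_le_cancel_left)
  also have "\<dots> \<le> 4 * T / (7 * real p) * vnorm x" using SB vnorm_nonneg[of x] by (rule mult_right_mono)
  finally show ?thesis .
qed


lemma geo3: "(\<Sum>k\<in>{-int n..int n}. (1/2::real) ^ (nat \<bar>k\<bar>)) \<le> 3 - 2 * (1/2) ^ n"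
proof (induction n)
  case 0
  then show ?case by simp
next
  case (Suc n)
  have eq: "{-int (Suc n)..int (Suc n)} = insert (int (Suc n)) (insert (- int (Suc n)) {-int n..int n})"
    by auto
  have "(\<Sum>k\<in>{-int (Suc n)..int (Suc n)}. (1/2::real) ^ (nat \<bar>k\<bar>))
      = (1/2) ^ Suc n + ((1/2) ^ Suc n + (\<Sum>k\<in>{-int n..int n}. (1/2::real) ^ (nat \<bar>k\<bar>)))"
    unfolding eq by (simp add: nat_add_distrib)
  also have "\<dots> \<le> (1/2) ^ Suc n + ((1/2) ^ Suc n + (3 - 2 * (1/2) ^ n))" using Suc by simp
  also have "\<dots> = 3 - 2 * (1/2) ^ Suc n" by (simp add: power_add)
  finally show ?case .
qed

lemma exp_sq_le: "exp (- (real_of_int k)\<^sup>2) \<le> (1/2) ^ (nat \<bar>k\<bar>)"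
proof -
  let ?m = "nat \<bar>k\<bar>"
  have m: "real ?m \<le> (real_of_int k)\<^sup>2"
  proof -
    have ki: "\<bar>k\<bar> \<le> \<bar>k\<bar> * \<bar>k\<bar>"
    proof (cases "k = 0")
      case False
      then have "1 \<le> \<bar>k\<bar>" by simp
      then have "\<bar>k\<bar> * 1 \<le> \<bar>k\<bar> * \<bar>k\<bar>" by (intro mult_left_mono) auto
      then show ?thesis by simp
    qed simp
    have "real ?m = real_of_int \<bar>k\<bar>" by simp
    also have "\<dots> \<le> real_of_int (\<bar>k\<bar> * \<bar>k\<bar>)" using ki by linarith
    also have "\<dots> = (real_of_int k)\<^sup>2" by (simp add: power2_eq_square abs_mult[symmetric])
    finally show ?thesis .
  qed
  have "(2::real) ^ ?m \<le> exp 1 ^ ?m" using exp_ge_add_one_self[of 1] by (intro power_mono) auto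
  also have "\<dots> = exp (real ?m)" using exp_of_nat_mult[of ?m "1::real"] by simp
  also have "\<dots> \<le> exp ((real_of_int k)\<^sup>2)" using m by simp
  finally have "2 ^ ?m \<le> exp ((real_of_int k)\<^sup>2)" .
  then have "1 / exp ((real_of_int k)\<^sup>2) \<le> 1 / 2 ^ ?m" by (intro divide_left_mono) auto
  then show ?thesis by (simp add: exp_minus power_one_over inverse_eq_divide)
qed

lemma sum_exp_sq: "(\<Sum>k\<in>{-int n..int n}. exp (- (real_of_int k)\<^sup>2)) \<le> 3"
proof -
  have "(\<Sum>k\<in>{-int n..int n}. exp (- (real_of_int k)\<^sup>2)) \<le> (\<Sum>k\<in>{-int n..int n}. (1/2::real) ^ (nat \<bar>k\<bar>))"
    by (intro sum_mono exp_sq_le)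
  also have "\<dots> \<le> 3" using geo3[of n] zero_le_power[of "1/2::real" n] by linarith
  finally show ?thesis .
qed

lemma netv_card:
  assumes p: "0 < p"
  shows "finite (netv p)" "real (card (netv p)) \<le> exp (9 * real p)"
proof -
  define r where "r = int (3 * p)"
  define G where "G = {g \<in> PiE {..<p} (\<lambda>_. {-r..r}). (\<Sum>i<p. (real_of_int (g i))\<^sup>2) \<le> 25 * real p / 4}"
  define \<phi> where "\<phi> g = vec p (\<lambda>i. real_of_int (g i))" for g :: "nat \<Rightarrow> int"
  have finPi: "finite (PiE {..<p} (\<lambda>_. {-r..r}))" by (intro finite_PiE) auto
  have finG: "finite G" unfolding G_def using finPi by simp
  have sub: "netv p \<subseteq> \<phi> ` G"
  proof
    fix z assume z: "z \<in> netv p"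
    then have zc: "z \<in> carrier_vec p" and zi: "\<And>i. i < p \<Longrightarrow> z $ i \<in> \<int>"
      and zn: "(vnorm z)\<^sup>2 \<le> 25 * real p / 4" unfolding netv_def by auto
    define g where "g = restrict (\<lambda>i. \<lfloor>z $ i\<rfloor>) {..<p}"
    have gz: "real_of_int (g i) = z $ i" if "i < p" for i
      using zi[OF that] that unfolding g_def by (auto elim: Ints_cases)
    have sq: "(\<Sum>i<p. (z $ i)\<^sup>2) = (vnorm z)\<^sup>2" unfolding vnorm_def using zc by (simp add: sum_nonneg)
    have bnd: "\<bar>g i\<bar> \<le> r" if i: "i < p" for i
    proof -
      have "(z $ i)\<^sup>2 \<le> (\<Sum>j<p. (z $ j)\<^sup>2)" using i by (intro member_le_sum) auto
      also have "\<dots> \<le> 25 * real p / 4" using sq zn by simp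
      also have "\<dots> \<le> (3 * real p)\<^sup>2" using p by (simp add: power2_eq_square)
      finally have "\<bar>z $ i\<bar> \<le> 3 * real p" by (rule power2_le_imp_le[of "\<bar>z $ i\<bar>", simplified]) simp
      then have "\<bar>real_of_int (g i)\<bar> \<le> real_of_int r" using gz[OF i] unfolding r_def by simp
      then show ?thesis by linarith
    qed
    have "g \<in> G" unfolding G_def
    proof (intro CollectI conjI)
      have "g i \<in> {-r..r}" if "i < p" for i using bnd[OF that] by (simp only: atLeastAtMost_iff) arith
      then show "g \<in> PiE {..<p} (\<lambda>_. {-r..r})" unfolding g_def by (auto simp: PiE_iff)
      show "(\<Sum>i<p. (real_of_int (g i))\<^sup>2) \<le> 25 * real p / 4" using sq zn gz by simp
    qed
    moreover have "\<phi> g = z" unfolding \<phi>_def using zc gz by (auto simp: vec_eq_iff)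
    ultimately show "z \<in> \<phi> ` G" by blast
  qed
  show fin: "finite (netv p)" using sub finG by (meson finite_surj)
  have "card (netv p) \<le> card G" using sub finG by (meson card_image_le card_mono finite_imageI le_trans)
  then have "real (card (netv p)) \<le> real (card G)" by simp
  also have "real (card G) = (\<Sum>g\<in>G. 1)" by simp
  also have "\<dots> \<le> (\<Sum>g\<in>G. exp (25 * real p / 4) * (\<Prod>i<p. exp (- (real_of_int (g i))\<^sup>2)))"
  proof (rule sum_mono)
    fix g assume "g \<in> G"
    then have "(\<Sum>i<p. (real_of_int (g i))\<^sup>2) \<le> 25 * real p / 4" unfolding G_def by simp
    then have "1 \<le> exp (25 * real p / 4 + (\<Sum>i<p. - (real_of_int (g i))\<^sup>2))" by (simp add: sum_negf)
    also have "\<dots> = exp (25 * real p / 4) * (\<Prod>i<p. exp (- (real_of_int (g i))\<^sup>2))"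
      by (simp add: exp_add exp_sum)
    finally show "1 \<le> exp (25 * real p / 4) * (\<Prod>i<p. exp (- (real_of_int (g i))\<^sup>2))" .
  qed
  also have "\<dots> \<le> (\<Sum>g\<in>PiE {..<p} (\<lambda>_. {-r..r}). exp (25 * real p / 4) * (\<Prod>i<p. exp (- (real_of_int (g i))\<^sup>2)))"
  proof (rule sum_mono2[OF finPi])
    show "G \<subseteq> PiE {..<p} (\<lambda>_. {-r..r})" unfolding G_def by blast
    show "0 \<le> exp (25 * real p / 4) * (\<Prod>i<p. exp (- (real_of_int (g i))\<^sup>2))" for g
      by (intro mult_nonneg_nonneg prod_nonneg) auto
  qed
  also have "\<dots> = exp (25 * real p / 4) * (\<Sum>g\<in>PiE {..<p} (\<lambda>_. {-r..r}). (\<Prod>i<p. exp (- (real_of_int (g i))\<^sup>2)))"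
    by (rule sum_distrib_left[symmetric])
  also have "\<dots> = exp (25 * real p / 4) * (\<Prod>i<p. \<Sum>k\<in>{-r..r}. exp (- (real_of_int k)\<^sup>2))"
    using prod_sum_PiE[of "{..<p}" "\<lambda>_. {-r..r}" "\<lambda>i k. exp (- (real_of_int k)\<^sup>2)"] by simp
  also have "\<dots> \<le> exp (25 * real p / 4) * (\<Prod>i<p. 3)"
  proof (intro mult_left_mono prod_mono conjI)
    fix i show "0 \<le> (\<Sum>k\<in>{-r..r}. exp (- (real_of_int k)\<^sup>2))" by (intro sum_nonneg) auto
    show "(\<Sum>k\<in>{-r..r}. exp (- (real_of_int k)\<^sup>2)) \<le> 3" using sum_exp_sq[of "3 * p"] unfolding r_def by simp
  qed simp
  also have "(\<Prod>i<p. (3::real)) = 3 ^ p" by simp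
  also have "(3::real) ^ p \<le> exp 2 ^ p" using exp_ge_add_one_self[of 2] by (intro power_mono) auto
  also have "exp 2 ^ p = exp (2 * real p)" using exp_of_nat_mult[of p "2::real"] by (simp add: mult.commute)
  also have "exp (25 * real p / 4) * exp (2 * real p) = exp (33 * real p / 4)" by (simp add: exp_add[symmetric])
  also have "\<dots> \<le> exp (9 * real p)" by simp
  finally show "real (card (netv p)) \<le> exp (9 * real p)" by simp
qed


lemma ns_prob: "0 < \<sigma> \<Longrightarrow> prob_space (noise_space p \<sigma>)"
  unfolding noise_space_def by (intro prob_space_pair prob_space_PiM gauss_prob)

lemma fst_meas: "k \<in> {..<p} \<times> {..<p} \<Longrightarrow> (\<lambda>\<omega>. fst \<omega> k) \<in> borel_measurable (noise_space p \<sigma>)"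
  unfolding noise_space_def by (rule measurable_compose[OF measurable_fst comp_meas])

lemma snd_meas: "i < p \<Longrightarrow> (\<lambda>\<omega>. snd \<omega> i) \<in> borel_measurable (noise_space p \<sigma>)"
  unfolding noise_space_def by (rule measurable_compose[OF measurable_snd comp_meas]) simp

lemma ns_fst_event:
  assumes s: "0 < \<sigma>" and A: "A \<in> sets (PiM ({..<p} \<times> {..<p}) (\<lambda>_. gauss \<sigma>))"
  shows "emeasure (noise_space p \<sigma>) (A \<times> space (PiM {..<p} (\<lambda>_. gauss \<sigma>)))
    = emeasure (PiM ({..<p} \<times> {..<p}) (\<lambda>_. gauss \<sigma>)) A"
proof -
  interpret P2: prob_space "PiM {..<p} (\<lambda>_. gauss \<sigma>)" by (intro prob_space_PiM gauss_prob s)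
  show ?thesis unfolding noise_space_def using A
    by (simp add: P2.emeasure_pair_measure_Times P2.emeasure_space_1)
qed

lemma ns_snd_event:
  assumes s: "0 < \<sigma>" and B: "B \<in> sets (PiM {..<p} (\<lambda>_. gauss \<sigma>))"
  shows "emeasure (noise_space p \<sigma>) (space (PiM ({..<p} \<times> {..<p}) (\<lambda>_. gauss \<sigma>)) \<times> B)
    = emeasure (PiM {..<p} (\<lambda>_. gauss \<sigma>)) B"
proof -
  interpret P1: prob_space "PiM ({..<p} \<times> {..<p}) (\<lambda>_. gauss \<sigma>)" by (intro prob_space_PiM gauss_prob s)
  interpret P2: prob_space "PiM {..<p} (\<lambda>_. gauss \<sigma>)" by (intro prob_space_PiM gauss_prob s)
  show ?thesis unfolding noise_space_def using B
    by (simp add: P2.emeasure_pair_measure_Times P1.emeasure_space_1)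
qed

lemma bf_noise:
  assumes z: "z \<in> carrier_vec p" and w: "w \<in> carrier_vec p"
  shows "bf (noise_mat p \<omega>) z w = (\<Sum>k\<in>{..<p} \<times> {..<p}. (z $ fst k * w $ snd k) * fst \<omega> k)"
proof -
  have "bf (noise_mat p \<omega>) z w = (\<Sum>i<p. \<Sum>j<p. (z $ i * w $ j) * fst \<omega> (i, j))"
    unfolding bf_def noise_mat_def using z w
    by (simp add: scalar_prod_def sum_distrib_left atLeast0LessThan mult.commute mult.left_commute)
  also have "\<dots> = (\<Sum>k\<in>{..<p} \<times> {..<p}. (z $ fst k * w $ snd k) * fst \<omega> k)"
    by (simp add: sum.cartesian_product split_beta)
  finally show ?thesis .
qed

lemma sumsq_prod:
  assumes z: "z \<in> carrier_vec p" and w: "w \<in> carrier_vec p"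
  shows "(\<Sum>k\<in>{..<p} \<times> {..<p}. (z $ fst k * w $ snd k)\<^sup>2) = (vnorm z)\<^sup>2 * (vnorm w)\<^sup>2"
proof -
  have "(vnorm z)\<^sup>2 * (vnorm w)\<^sup>2 = (\<Sum>i<p. (z $ i)\<^sup>2) * (\<Sum>j<p. (w $ j)\<^sup>2)"
    unfolding vnorm_def using z w by (simp add: sum_nonneg)
  also have "\<dots> = (\<Sum>i<p. \<Sum>j<p. (z $ i * w $ j)\<^sup>2)"
    by (simp add: sum_product power_mult_distrib)
  also have "\<dots> = (\<Sum>k\<in>{..<p} \<times> {..<p}. (z $ fst k * w $ snd k)\<^sup>2)"
    by (simp add: sum.cartesian_product split_beta)
  finally show ?thesis by simp
qed

lemma meas_ge_set: "f \<in> borel_measurable M \<Longrightarrow> {x \<in> space M. (a::real) \<le> f x} \<in> sets M"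
  using borel_measurable_iff_ge by blast

lemma pair_tail:
  assumes s: "0 < \<sigma>" and z: "z \<in> carrier_vec p" and w: "w \<in> carrier_vec p" and T: "0 < T"
    and K: "(vnorm z)\<^sup>2 * (vnorm w)\<^sup>2 \<le> K" "0 < K"
  shows "{\<omega> \<in> space (noise_space p \<sigma>). T \<le> bf (noise_mat p \<omega>) z w} \<in> sets (noise_space p \<sigma>)"
    "measure (noise_space p \<sigma>) {\<omega> \<in> space (noise_space p \<sigma>). T \<le> bf (noise_mat p \<omega>) z w}
      \<le> exp (- T\<^sup>2 / (2 * \<sigma>\<^sup>2 * K))"
proof -
  let ?I = "{..<p} \<times> {..<p}"
  let ?M1 = "PiM ?I (\<lambda>_. gauss \<sigma>)"
  let ?M2 = "PiM {..<p} (\<lambda>_. gauss \<sigma>)"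
  define c where "c k = z $ fst k * w $ snd k" for k
  let ?A = "{x \<in> space ?M1. T \<le> (\<Sum>k\<in>?I. c k * x k)}"
  have f: "(\<lambda>x. \<Sum>k\<in>?I. c k * x k) \<in> borel_measurable ?M1"
    by (auto intro!: borel_measurable_sum borel_measurable_times comp_meas)
  have Am: "?A \<in> sets ?M1" by (rule meas_ge_set[OF f])
  have eq: "{\<omega> \<in> space (noise_space p \<sigma>). T \<le> bf (noise_mat p \<omega>) z w} = ?A \<times> space ?M2"
    unfolding noise_space_def space_pair_measure using bf_noise[OF z w] unfolding c_def by auto
  show sm: "{\<omega> \<in> space (noise_space p \<sigma>). T \<le> bf (noise_mat p \<omega>) z w} \<in> sets (noise_space p \<sigma>)"
    unfolding eq unfolding noise_space_def using Am by (intro pair_measureI) auto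
  interpret P: prob_space "noise_space p \<sigma>" by (rule ns_prob[OF s])
  have S: "(\<Sum>k\<in>?I. (c k)\<^sup>2) = (vnorm z)\<^sup>2 * (vnorm w)\<^sup>2" unfolding c_def by (rule sumsq_prod[OF z w])
  show "measure (noise_space p \<sigma>) {\<omega> \<in> space (noise_space p \<sigma>). T \<le> bf (noise_mat p \<omega>) z w}
      \<le> exp (- T\<^sup>2 / (2 * \<sigma>\<^sup>2 * K))"
  proof (cases "(\<Sum>k\<in>?I. (c k)\<^sup>2) = 0")
    case True
    have c0: "c k = 0" if "k \<in> ?I" for k
      using True sum_nonneg_eq_0_iff[of ?I "\<lambda>k. (c k)\<^sup>2"] that by (cases k) auto
    have "bf (noise_mat p \<omega>) z w = 0" for \<omega>
    proof -
      have "bf (noise_mat p \<omega>) z w = (\<Sum>k\<in>?I. c k * fst \<omega> k)" using bf_noise[OF z w] unfolding c_def by simp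
      also have "\<dots> = 0" by (rule sum.neutral) (use c0 in auto)
      finally show ?thesis .
    qed
    then have E: "{\<omega> \<in> space (noise_space p \<sigma>). T \<le> bf (noise_mat p \<omega>) z w} = {}" using T by auto
    show ?thesis unfolding E by simp
  next
    case False
    then have Spos: "0 < (\<Sum>k\<in>?I. (c k)\<^sup>2)" by (metis less_eq_real_def sum_nonneg zero_le_power2)
    have "emeasure (noise_space p \<sigma>) {\<omega> \<in> space (noise_space p \<sigma>). T \<le> bf (noise_mat p \<omega>) z w}
       = emeasure ?M1 ?A" unfolding eq by (rule ns_fst_event[OF s Am])
    also have "\<dots> \<le> ennreal (exp (- T\<^sup>2 / (2 * \<sigma>\<^sup>2 * (\<Sum>k\<in>?I. (c k)\<^sup>2))))"
      by (rule gauss_lin_tail[OF _ s Spos]) (use T in auto)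
    also have "\<dots> \<le> ennreal (exp (- T\<^sup>2 / (2 * \<sigma>\<^sup>2 * K)))"
    proof -
      have "T\<^sup>2 / (2 * \<sigma>\<^sup>2 * K) \<le> T\<^sup>2 / (2 * \<sigma>\<^sup>2 * (\<Sum>k\<in>?I. (c k)\<^sup>2))"
        using K S Spos s by (intro divide_left_mono mult_left_mono) auto
      then show ?thesis by (intro ennreal_leI) simp
    qed
    finally show ?thesis unfolding P.emeasure_eq_measure by (simp add: ennreal_le_iff)
  qed
qed

lemma n_sq_tail:
  assumes s: "0 < \<sigma>"
  shows "{\<omega> \<in> space (noise_space p \<sigma>). r \<le> (\<Sum>i<p. (snd \<omega> i)\<^sup>2)} \<in> sets (noise_space p \<sigma>)"
    "measure (noise_space p \<sigma>) {\<omega> \<in> space (noise_space p \<sigma>). r \<le> (\<Sum>i<p. (snd \<omega> i)\<^sup>2)}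
      \<le> sqrt 2 ^ p * exp (- r / (4 * \<sigma>\<^sup>2))"
proof -
  let ?M1 = "PiM ({..<p} \<times> {..<p}) (\<lambda>_. gauss \<sigma>)"
  let ?M2 = "PiM {..<p} (\<lambda>_. gauss \<sigma>)"
  let ?B = "{x \<in> space ?M2. r \<le> (\<Sum>i<p. (x i)\<^sup>2)}"
  have f: "(\<lambda>x. \<Sum>i<p. (x i)\<^sup>2) \<in> borel_measurable ?M2"
    by (auto intro!: borel_measurable_sum borel_measurable_power comp_meas)
  have Bm: "?B \<in> sets ?M2" by (rule meas_ge_set[OF f])
  have eq: "{\<omega> \<in> space (noise_space p \<sigma>). r \<le> (\<Sum>i<p. (snd \<omega> i)\<^sup>2)} = space ?M1 \<times> ?B"
    unfolding noise_space_def space_pair_measure by auto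
  show "{\<omega> \<in> space (noise_space p \<sigma>). r \<le> (\<Sum>i<p. (snd \<omega> i)\<^sup>2)} \<in> sets (noise_space p \<sigma>)"
    unfolding eq unfolding noise_space_def using Bm by (intro pair_measureI) auto
  interpret P: prob_space "noise_space p \<sigma>" by (rule ns_prob[OF s])
  have "emeasure (noise_space p \<sigma>) {\<omega> \<in> space (noise_space p \<sigma>). r \<le> (\<Sum>i<p. (snd \<omega> i)\<^sup>2)}
     = emeasure ?M2 ?B" unfolding eq by (rule ns_snd_event[OF s Bm])
  also have "\<dots> \<le> ennreal (sqrt 2 ^ card {..<p} * exp (- r / (4 * \<sigma>\<^sup>2)))"
    by (rule gauss_sq_tail[OF _ s]) auto
  finally show "measure (noise_space p \<sigma>) {\<omega> \<in> space (noise_space p \<sigma>). r \<le> (\<Sum>i<p. (snd \<omega> i)\<^sup>2)}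
      \<le> sqrt 2 ^ p * exp (- r / (4 * \<sigma>\<^sup>2))"
    unfolding P.emeasure_eq_measure by (simp add: ennreal_le_iff)
qed

lemma n_lin_tail:
  assumes s: "0 < \<sigma>" and p: "0 < p" and e: "\<bar>\<epsilon>\<bar> = 1" and a: "0 \<le> a"
  shows "{\<omega> \<in> space (noise_space p \<sigma>). a \<le> \<epsilon> * snd \<omega> 0} \<in> sets (noise_space p \<sigma>)"
    "measure (noise_space p \<sigma>) {\<omega> \<in> space (noise_space p \<sigma>). a \<le> \<epsilon> * snd \<omega> 0}
      \<le> exp (- a\<^sup>2 / (2 * \<sigma>\<^sup>2))"
proof -
  let ?M1 = "PiM ({..<p} \<times> {..<p}) (\<lambda>_. gauss \<sigma>)"
  let ?M2 = "PiM {..<p} (\<lambda>_. gauss \<sigma>)"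
  define c where "c i = (if i = 0 then \<epsilon> else 0)" for i :: nat
  have sc: "(\<Sum>i<p. c i * x i) = \<epsilon> * x 0" for x :: "nat \<Rightarrow> real"
  proof -
    have "(\<Sum>i<p. c i * x i) = (\<Sum>i<p. if i = 0 then \<epsilon> * x 0 else 0)" by (rule sum.cong) (auto simp: c_def)
    then show ?thesis using p by simp
  qed
  have sc2: "(\<Sum>i<p. (c i)\<^sup>2) = 1"
  proof -
    have "(\<Sum>i<p. (c i)\<^sup>2) = (\<Sum>i<p. if i = 0 then \<epsilon>\<^sup>2 else 0)" by (rule sum.cong) (auto simp: c_def)
    moreover have "\<epsilon>\<^sup>2 = 1" using e by (metis abs_power2 power2_abs power_one abs_one) 
    ultimately show ?thesis using p by simp
  qed
  let ?B = "{x \<in> space ?M2. a \<le> (\<Sum>i<p. c i * x i)}"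
  have f: "(\<lambda>x. \<Sum>i<p. c i * x i) \<in> borel_measurable ?M2"
    by (auto intro!: borel_measurable_sum borel_measurable_times comp_meas)
  have Bm: "?B \<in> sets ?M2" by (rule meas_ge_set[OF f])
  have eq: "{\<omega> \<in> space (noise_space p \<sigma>). a \<le> \<epsilon> * snd \<omega> 0} = space ?M1 \<times> ?B"
    unfolding noise_space_def space_pair_measure sc by auto
  show "{\<omega> \<in> space (noise_space p \<sigma>). a \<le> \<epsilon> * snd \<omega> 0} \<in> sets (noise_space p \<sigma>)"
    unfolding eq unfolding noise_space_def using Bm by (intro pair_measureI) auto
  interpret P: prob_space "noise_space p \<sigma>" by (rule ns_prob[OF s])
  have "emeasure (noise_space p \<sigma>) {\<omega> \<in> space (noise_space p \<sigma>). a \<le> \<epsilon> * snd \<omega> 0}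
     = emeasure ?M2 ?B" unfolding eq by (rule ns_snd_event[OF s Bm])
  also have "\<dots> \<le> ennreal (exp (- a\<^sup>2 / (2 * \<sigma>\<^sup>2 * (\<Sum>i<p. (c i)\<^sup>2))))"
    by (rule gauss_lin_tail[OF _ s]) (use sc2 a in auto)
  finally show "measure (noise_space p \<sigma>) {\<omega> \<in> space (noise_space p \<sigma>). a \<le> \<epsilon> * snd \<omega> 0}
      \<le> exp (- a\<^sup>2 / (2 * \<sigma>\<^sup>2))"
    unfolding P.emeasure_eq_measure sc2 by (simp add: ennreal_le_iff)
qed


lemma inj_det:
  fixes M :: "real mat"
  assumes M: "M \<in> carrier_mat p p" and c: "0 < c" and H: "\<And>x. x \<in> carrier_vec p \<Longrightarrow> c * vnorm x \<le> vnorm (M *\<^sub>v x)"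
  shows "det M \<noteq> 0"
proof
  assume "det M = 0"
  then obtain v where v: "v \<in> carrier_vec p" "v \<noteq> 0\<^sub>v p" "M *\<^sub>v v = 0\<^sub>v p"
    using det_0_iff_vec_prod_zero_field[OF M] by auto
  have "c * vnorm v \<le> 0" using H[OF v(1)] v(3) by (simp add: vnorm_def)
  then have "vnorm v = 0" using c vnorm_nonneg[of v] by (simp add: mult_le_0_iff)
  then show False using v vnorm_zero_iff by auto
qed

lemma det_main:
  fixes A N :: "real mat"
  assumes A: "A \<in> carrier_mat p p" and N: "N \<in> carrier_mat p p"
    and b: "b \<in> carrier_vec p" and nv: "n \<in> carrier_vec p" and \<beta>: "\<beta> \<in> carrier_vec p"
    and Ab: "A *\<^sub>v \<beta> = b"
    and s: "0 < s" and sA: "\<And>x. x \<in> carrier_vec p \<Longrightarrow> s * vnorm x \<le> vnorm (A *\<^sub>v x)"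
    and tN: "\<And>x. x \<in> carrier_vec p \<Longrightarrow> vnorm (N *\<^sub>v x) \<le> \<tau> * vnorm x"
    and eta: "0 < \<eta>" "\<eta> < 1"
    and tau: "\<tau> \<le> \<eta> * s / 40"
    and nn: "vnorm n \<le> 39 / 20 * (\<eta> * s / 1000)"
  shows "vnorm (minv (A + N) *\<^sub>v (b + n) - \<beta>) \<le> 2 * \<eta> * vnorm \<beta> + \<eta> / 500"
proof -
  define M where "M = A + N"
  have Mc: "M \<in> carrier_mat p p" unfolding M_def using A N by simp
  have "\<eta> * s \<le> 1 * s" using eta s by (intro mult_right_mono) auto
  then have st: "s - \<tau> \<ge> 39 / 40 * s" using tau by simp
  have st0: "s - \<tau> > 0" using st s by simp
  have Mb: "(s - \<tau>) * vnorm x \<le> vnorm (M *\<^sub>v x)" if x: "x \<in> carrier_vec p" for x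
  proof -
    have "M *\<^sub>v x = A *\<^sub>v x + N *\<^sub>v x" unfolding M_def using A N x by (simp add: add_mult_distrib_mat_vec)
    then have "vnorm (A *\<^sub>v x) - vnorm (N *\<^sub>v x) \<le> vnorm (M *\<^sub>v x)"
      using vnorm_rev[of "A *\<^sub>v x" "N *\<^sub>v x"] A N by simp
    then show ?thesis using sA[OF x] tN[OF x] by (simp add: algebra_simps)
  qed
  have dM: "det M \<noteq> 0" by (rule inj_det[OF Mc st0 Mb])
  note Mi = minv_right[OF Mc dM]
  define e where "e = minv M *\<^sub>v (b + n) - \<beta>"
  have bn: "b + n \<in> carrier_vec p" using b nv by simp
  have ec: "e \<in> carrier_vec p" unfolding e_def using Mi(2) bn \<beta> by simp
  have Me: "M *\<^sub>v e = n - N *\<^sub>v \<beta>"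
  proof -
    have "M *\<^sub>v e = M *\<^sub>v (minv M *\<^sub>v (b + n)) - M *\<^sub>v \<beta>"
      unfolding e_def using Mc Mi(2) bn \<beta> by (simp add: mult_minus_distrib_mat_vec)
    also have "M *\<^sub>v (minv M *\<^sub>v (b + n)) = b + n"
      using Mc Mi bn by (simp add: assoc_mult_mat_vec[symmetric])
    also have "M *\<^sub>v \<beta> = b + N *\<^sub>v \<beta>" unfolding M_def using A N \<beta> Ab by (simp add: add_mult_distrib_mat_vec)
    finally show ?thesis using b nv N \<beta> by (auto simp: vec_eq_iff)
  qed
  have "(s - \<tau>) * vnorm e \<le> vnorm (n - N *\<^sub>v \<beta>)" using Mb[OF ec] Me by simp
  also have "\<dots> \<le> vnorm n + vnorm (N *\<^sub>v \<beta>)" using vnorm_minus[of n "N *\<^sub>v \<beta>"] nv N \<beta> by simp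
  also have "\<dots> \<le> vnorm n + \<tau> * vnorm \<beta>" using tN[OF \<beta>] by simp
  finally have main: "(s - \<tau>) * vnorm e \<le> vnorm n + \<tau> * vnorm \<beta>" .
  have B0: "vnorm \<beta> \<ge> 0" by (rule vnorm_nonneg)
  show ?thesis unfolding e_def[symmetric] M_def[symmetric]
  proof (rule ccontr)
    assume "\<not> vnorm e \<le> 2 * \<eta> * vnorm \<beta> + \<eta> / 500"
    then have E: "vnorm e > 2 * \<eta> * vnorm \<beta> + \<eta> / 500" by simp
    have X0: "2 * \<eta> * vnorm \<beta> + \<eta> / 500 \<ge> 0" using eta B0 by simp
    have "(s - \<tau>) * (2 * \<eta> * vnorm \<beta> + \<eta> / 500) < (s - \<tau>) * vnorm e"
      using E st0 by (intro mult_strict_left_mono) auto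
    also have "\<dots> \<le> vnorm n + \<tau> * vnorm \<beta>" by (rule main)
    also have "\<dots> \<le> 39 / 20 * (\<eta> * s / 1000) + \<eta> * s / 40 * vnorm \<beta>"
      using nn tau B0 by (intro add_mono mult_right_mono) auto
    also have "\<dots> \<le> 39 / 40 * s * (2 * \<eta> * vnorm \<beta> + \<eta> / 500)"
      using s eta B0 by (simp add: algebra_simps mult_right_mono)
    also have "\<dots> \<le> (s - \<tau>) * (2 * \<eta> * vnorm \<beta> + \<eta> / 500)"
      using st X0 by (intro mult_right_mono) auto
    finally show False by simp
  qed
qed

lemma vnorm_sq_sum: "(vnorm v)\<^sup>2 = (\<Sum>i<dim_vec v. (v $ i)\<^sup>2)"
  unfolding vnorm_def by (simp add: sum_nonneg)

lemma exp_ge_quad: "0 \<le> x \<Longrightarrow> 1 + x + x\<^sup>2 / 2 \<le> exp (x::real)"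
  by (rule exp_lower_Taylor_quadratic)

lemma num1:
  fixes L :: real assumes L: "1 \<le> L" and p: "1 \<le> p"
  shows "exp (9 * p) * exp (9 * p) * exp (- (49/2) * p * L\<^sup>2) \<le> exp (- L) / 20"
proof -
  have LL: "L \<le> L\<^sup>2" using L by (simp add: power2_eq_square)
  have neg: "18 - 49/2 * L\<^sup>2 \<le> 0" using LL L by simp
  have "p * (18 - 49/2 * L\<^sup>2) \<le> 1 * (18 - 49/2 * L\<^sup>2)"
    using neg p by (intro mult_right_mono_neg) auto
  then have e: "9 * p + 9 * p + (- (49/2) * p * L\<^sup>2) \<le> - L + (- (11/2))"
    using LL L by (simp add: algebra_simps)
  have "exp (9 * p) * exp (9 * p) * exp (- (49/2) * p * L\<^sup>2) = exp (9 * p + 9 * p + (- (49/2) * p * L\<^sup>2))"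
    by (simp only: exp_add[symmetric])
  also have "\<dots> \<le> exp (- L + (- (11/2)))" using e by simp
  also have "\<dots> = exp (- L) / exp (11/2)" by (simp only: exp_add exp_minus divide_inverse)
  also have "\<dots> \<le> exp (- L) / 20"
  proof -
    have "20 \<le> 1 + 11/2 + (11/2::real)\<^sup>2 / 2" by (simp add: power2_eq_square)
    also have "\<dots> \<le> exp (11/2)" by (rule exp_ge_quad) simp
    finally show ?thesis by (intro divide_left_mono) auto
  qed
  finally show ?thesis .
qed

lemma num2:
  fixes L :: real assumes L: "1 \<le> L"
  shows "2 * exp (- ((39/20)\<^sup>2 * L\<^sup>2 / 2)) \<le> 9/10 * exp (- L)"
proof -
  have LL: "L \<le> L\<^sup>2" using L by (simp add: power2_eq_square)
  have e: "- ((39/20)\<^sup>2 * L\<^sup>2 / 2) \<le> - L + (- (9/10))" using LL L unfolding power2_eq_square by linarith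
  have "2 * exp (- ((39/20)\<^sup>2 * L\<^sup>2 / 2)) \<le> 2 * exp (- L + (- (9/10)))" using e by simp
  also have "\<dots> = exp (- L) * (2 / exp (9/10))" by (simp only: exp_add exp_minus divide_inverse)
  also have "\<dots> \<le> exp (- L) * (9/10)"
  proof -
    have "20/9 \<le> 1 + 9/10 + (9/10::real)\<^sup>2 / 2" by (simp add: power2_eq_square)
    also have "\<dots> \<le> exp (9/10)" by (rule exp_ge_quad) simp
    finally have "2 / exp (9/10) \<le> (9/10::real)" by (simp add: field_simps)
    then show ?thesis by (intro mult_left_mono) auto
  qed
  finally show ?thesis by simp
qed

lemma num3:
  fixes L :: real assumes L: "1 \<le> L" and p: "2 \<le> p"
  shows "sqrt 2 ^ p * exp (- ((39/20)\<^sup>2 * (real p * L\<^sup>2) / 4)) \<le> 9/10 * exp (- L)"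
proof -
  have LL: "L \<le> L\<^sup>2" using L by (simp add: power2_eq_square)
  have s2: "sqrt 2 \<le> exp (7/20)"
  proof -
    have q: "1 + 7/40 + (7/40::real)\<^sup>2 / 2 \<le> exp (7/40)" by (rule exp_ge_quad) simp
    have "(2::real) \<le> (1 + 7/40 + (7/40)\<^sup>2 / 2) ^ 4" by (simp add: power2_eq_square power4_eq_xxxx)
    also have "\<dots> \<le> exp (7/40) ^ 4" using q by (intro power_mono) (auto simp: power2_eq_square)
    also have "\<dots> = (exp (7/20))\<^sup>2"
      by (simp add: exp_of_nat_mult[symmetric] power2_eq_square exp_add[symmetric])
    finally have "2 \<le> (exp (7/20::real))\<^sup>2" .
    then have "sqrt 2 \<le> sqrt ((exp (7/20::real))\<^sup>2)" by (rule real_sqrt_le_mono)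
    then show ?thesis by simp
  qed
  have "sqrt 2 ^ p \<le> exp (7/20) ^ p" using s2 by (intro power_mono) auto
  also have "\<dots> = exp (real p * (7/20))" by (rule exp_of_nat_mult[symmetric])
  finally have sp: "sqrt 2 ^ p \<le> exp (real p * (7/20))" .
  have neg: "7/20 - (39/20)\<^sup>2 / 4 * L\<^sup>2 \<le> 0" using LL L unfolding power2_eq_square by linarith
  have "real p * (7/20 - (39/20)\<^sup>2 / 4 * L\<^sup>2) \<le> 2 * (7/20 - (39/20)\<^sup>2 / 4 * L\<^sup>2)"
    using neg p by (intro mult_right_mono_neg) auto
  moreover have "real p * (7/20) + - ((39/20)\<^sup>2 * (real p * L\<^sup>2) / 4) = real p * (7/20 - (39/20)\<^sup>2 / 4 * L\<^sup>2)"
    by (simp add: algebra_simps)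
  moreover have "2 * (7/20 - (39/20)\<^sup>2 / 4 * L\<^sup>2) \<le> - L + (- (1/5))"
  proof -
    have c: "(39/20::real)\<^sup>2 / 4 = 1521/1600" by (simp add: power2_eq_square)
    have "2 * (7/20 - 1521/1600 * L\<^sup>2) \<le> - L + (- (1/5))" using LL L by (simp add: field_simps)
    then show ?thesis unfolding c .
  qed
  ultimately have e: "real p * (7/20) + - ((39/20)\<^sup>2 * (real p * L\<^sup>2) / 4) \<le> - L + (- (1/5))"
    by linarith
  have "sqrt 2 ^ p * exp (- ((39/20)\<^sup>2 * (real p * L\<^sup>2) / 4))
      \<le> exp (real p * (7/20)) * exp (- ((39/20)\<^sup>2 * (real p * L\<^sup>2) / 4))"
    using sp by (intro mult_right_mono) auto
  also have "\<dots> = exp (real p * (7/20) + - ((39/20)\<^sup>2 * (real p * L\<^sup>2) / 4))" by (simp only: exp_add)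
  also have "\<dots> \<le> exp (- L + (- (1/5)))" using e by simp
  also have "\<dots> = exp (- L) * (1 / exp (1/5))" by (simp only: exp_add exp_minus divide_inverse)
  also have "\<dots> \<le> exp (- L) * (9/10)"
  proof -
    have "10/9 \<le> 1 + (1/5::real)" by simp
    also have "\<dots> \<le> exp (1/5)" by (rule exp_ge_add_one_self)
    finally have "1 / exp (1/5) \<le> (9/10::real)" by (simp add: field_simps)
    then show ?thesis by (intro mult_left_mono) auto
  qed
  finally show ?thesis by simp
qed

lemma minv_carrier: "(M :: real mat) \<in> carrier_mat p p \<Longrightarrow> minv M \<in> carrier_mat p p"
  using minv_adj[of M p] adj_mat(1)[of M p] by simp

lemma minv_mult_entry:
  assumes M: "(M :: real mat) \<in> carrier_mat p p" and v: "v \<in> carrier_vec p" and i: "i < p"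
  shows "(minv M *\<^sub>v v) $ i = (\<Sum>j<p. minv M $$ (i, j) * v $ j)"
  using minv_carrier[OF M] v i by (simp add: scalar_prod_def atLeast0LessThan)

lemma tgt_meas:
  assumes A: "A \<in> carrier_mat p p" and b: "b \<in> carrier_vec p" and \<beta>: "\<beta> \<in> carrier_vec p"
  shows "(\<lambda>\<omega>. vnorm (minv (A + noise_mat p \<omega>) *\<^sub>v (b + noise_vec p \<omega>) - \<beta>))
    \<in> borel_measurable (noise_space p \<sigma>)"
proof -
  define F where "F \<omega> = A + noise_mat p \<omega>" for \<omega>
  have Fc: "F \<omega> \<in> carrier_mat p p" for \<omega> unfolding F_def noise_mat_def using A by auto
  have Fm: "(\<lambda>\<omega>. F \<omega> $$ (i,j)) \<in> borel_measurable (noise_space p \<sigma>)" if "i < p" "j < p" for i j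
  proof -
    have "F \<omega> $$ (i,j) = A $$ (i,j) + fst \<omega> (i,j)" for \<omega> unfolding F_def noise_mat_def using A that by simp
    moreover have "(\<lambda>\<omega>. fst \<omega> (i,j)) \<in> borel_measurable (noise_space p \<sigma>)" using that by (intro fst_meas) auto
    ultimately show ?thesis by simp
  qed
  have eq: "vnorm (minv (F \<omega>) *\<^sub>v (b + noise_vec p \<omega>) - \<beta>)
     = sqrt (\<Sum>i<p. ((\<Sum>j<p. minv (F \<omega>) $$ (i, j) * (b $ j + snd \<omega> j)) - \<beta> $ i)\<^sup>2)" for \<omega>
  proof -
    have nv: "b + noise_vec p \<omega> \<in> carrier_vec p" unfolding noise_vec_def using b by simp
    have "vnorm (minv (F \<omega>) *\<^sub>v (b + noise_vec p \<omega>) - \<beta>)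
        = sqrt (\<Sum>i<p. ((minv (F \<omega>) *\<^sub>v (b + noise_vec p \<omega>)) $ i - \<beta> $ i)\<^sup>2)"
      unfolding vnorm_def using minv_carrier[OF Fc] \<beta> by simp
    also have "\<dots> = sqrt (\<Sum>i<p. ((\<Sum>j<p. minv (F \<omega>) $$ (i, j) * (b $ j + snd \<omega> j)) - \<beta> $ i)\<^sup>2)"
    proof -
      have "(minv (F \<omega>) *\<^sub>v (b + noise_vec p \<omega>)) $ i = (\<Sum>j<p. minv (F \<omega>) $$ (i, j) * (b $ j + snd \<omega> j))"
        if "i < p" for i
        using minv_mult_entry[OF Fc nv that] b unfolding noise_vec_def by simp
      then show ?thesis by simp
    qed
    finally show ?thesis .
  qed
  have mm: "(\<lambda>\<omega>. minv (F \<omega>) $$ (i, j)) \<in> borel_measurable (noise_space p \<sigma>)" if "i < p" "j < p" for i j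
    by (rule measurable_minv_entry[OF Fc Fm that])
  have "(\<lambda>\<omega>. sqrt (\<Sum>i<p. ((\<Sum>j<p. minv (F \<omega>) $$ (i, j) * (b $ j + snd \<omega> j)) - \<beta> $ i)\<^sup>2))
       \<in> borel_measurable (noise_space p \<sigma>)"
  proof (rule measurable_compose[OF _ borel_measurable_sqrt])
    show "(\<lambda>\<omega>. \<Sum>i<p. ((\<Sum>j<p. minv (F \<omega>) $$ (i, j) * (b $ j + snd \<omega> j)) - \<beta> $ i)\<^sup>2)
       \<in> borel_measurable (noise_space p \<sigma>)"
      by (intro borel_measurable_sum borel_measurable_power borel_measurable_diff
        borel_measurable_times borel_measurable_add borel_measurable_const mm snd_meas) auto
  qed
  then have "(\<lambda>\<omega>. vnorm (minv (F \<omega>) *\<^sub>v (b + noise_vec p \<omega>) - \<beta>)) \<in> borel_measurable (noise_space p \<sigma>)"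
    by (simp only: eq)
  then show ?thesis unfolding F_def .
qed

lemma main_pos:
  fixes X :: "real mat" and y :: "real vec"
  assumes X: "X \<in> carrier_mat n p" and y: "y \<in> carrier_vec n"
    and eta: "0 < \<eta>" "\<eta> < 1" and nu: "0 < \<nu>" "\<nu> < 1 / exp 1" and s: "0 < \<sigma>"
    and hyp: "sigma_min (transpose_mat X * X) \<ge> 2 * 500 / \<eta> * \<sigma> * sqrt (real p) * ln (1 / \<nu>)"
    and p: "0 < p"
  shows "measure (noise_space p \<sigma>) {\<omega> \<in> space (noise_space p \<sigma>).
     vnorm (minv (transpose_mat X * X + noise_mat p \<omega>) *\<^sub>v (transpose_mat X *\<^sub>v y + noise_vec p \<omega>)
       - minv (transpose_mat X * X) *\<^sub>v (transpose_mat X *\<^sub>v y))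
     \<le> 2 * \<eta> * vnorm (minv (transpose_mat X * X) *\<^sub>v (transpose_mat X *\<^sub>v y)) + \<eta> / 500} \<ge> 1 - \<nu>"
proof -
  define A where "A = transpose_mat X * X"
  define b where "b = transpose_mat X *\<^sub>v y"
  define \<beta> where "\<beta> = minv A *\<^sub>v b"
  define L where "L = ln (1 / \<nu>)"
  define Q where "Q = \<sigma> * sqrt (real p) * L"
  define sm where "sm = sigma_min A"
  define \<Omega> where "\<Omega> = noise_space p \<sigma>"
  have Ac: "A \<in> carrier_mat p p" unfolding A_def using X by simp
  have bc: "b \<in> carrier_vec p" unfolding b_def using X y by simp
  have L1: "1 < L"
  proof -
    have "exp 1 < 1 / \<nu>" using nu by (simp add: field_simps)
    then have "ln (exp 1) < ln (1 / \<nu>)" using nu by (intro ln_less_cancel_iff[THEN iffD2]) auto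
    then show ?thesis unfolding L_def by simp
  qed
  have nuL: "exp (- L) = \<nu>" unfolding L_def using nu by (simp add: ln_div)
  have Q0: "0 < Q" unfolding Q_def using s p L1 by simp
  have hyp': "1000 * Q / \<eta> \<le> sm"
  proof -
    have eq: "2 * 500 / \<eta> * \<sigma> * sqrt (real p) * ln (1 / \<nu>) = 1000 * Q / \<eta>" using eta unfolding Q_def L_def by (simp add: field_simps)
    show ?thesis using hyp unfolding sm_def A_def eq .
  qed
  have smQ: "Q \<le> \<eta> * sm / 1000" using hyp' eta by (simp add: field_simps)
  have tauB: "25 * Q \<le> \<eta> * sm / 40"
  proof -
    have "25 * Q \<le> 25 * (\<eta> * sm / 1000)" using smQ by simp
    also have "25 * (\<eta> * sm / 1000) = \<eta> * sm / 40" by simp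
    finally show ?thesis .
  qed
  have sm0: "0 < sm" using hyp' Q0 eta by (smt (verit) divide_pos_pos)
  have sA: "sm * vnorm x \<le> vnorm (A *\<^sub>v x)" if "x \<in> carrier_vec p" for x
    unfolding sm_def by (rule sigma_min_bound[OF Ac p that])
  have dA: "det A \<noteq> 0" by (rule inj_det[OF Ac sm0 sA])
  note Ai = minv_right[OF Ac dA]
  have \<beta>c: "\<beta> \<in> carrier_vec p" unfolding \<beta>_def using Ai(2) bc by simp
  have A\<beta>: "A *\<^sub>v \<beta> = b" unfolding \<beta>_def using Ac Ai bc by (simp add: assoc_mult_mat_vec[symmetric])
  define T where "T = 175 * real p * Q / 4"
  have T0: "0 < T" unfolding T_def using Q0 p by simp
  define f where "f \<omega> = vnorm (minv (A + noise_mat p \<omega>) *\<^sub>v (b + noise_vec p \<omega>) - \<beta>)" for \<omega>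
  define Tg where "Tg = {\<omega> \<in> space \<Omega>. f \<omega> \<le> 2 * \<eta> * vnorm \<beta> + \<eta> / 500}"
  define E1 where "E1 = (\<Union>z\<in>netv p. \<Union>w\<in>netv p. {\<omega> \<in> space \<Omega>. T \<le> bf (noise_mat p \<omega>) z w})"
  define E2 where "E2 = {\<omega> \<in> space \<Omega>. (39/20 * Q)\<^sup>2 \<le> (\<Sum>i<p. (snd \<omega> i)\<^sup>2)}"
  interpret P: prob_space \<Omega> unfolding \<Omega>_def by (rule ns_prob[OF s])
  have netc: "z \<in> carrier_vec p" "(vnorm z)\<^sup>2 \<le> 25 * real p / 4" if "z \<in> netv p" for z
    using that unfolding netv_def by auto
  note nfin = netv_card[OF p]
  have fm: "f \<in> borel_measurable \<Omega>" unfolding f_def \<Omega>_def by (rule tgt_meas[OF Ac bc \<beta>c])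
  have Tgm: "Tg \<in> P.events" unfolding Tg_def using fm borel_measurable_iff_le by blast
  have E2m: "E2 \<in> P.events" unfolding E2_def \<Omega>_def by (rule n_sq_tail(1)[OF s])
  have sub: "space \<Omega> - Tg \<subseteq> E1 \<union> E2"
  proof
    fix \<omega> assume \<omega>: "\<omega> \<in> space \<Omega> - Tg"
    show "\<omega> \<in> E1 \<union> E2"
    proof (rule ccontr)
      assume nE: "\<omega> \<notin> E1 \<union> E2"
      have \<omega>s: "\<omega> \<in> space \<Omega>" using \<omega> by simp
      have n1: "bf (noise_mat p \<omega>) z w \<le> T" if "z \<in> netv p" "w \<in> netv p" for z w
      proof -
        have "\<not> T \<le> bf (noise_mat p \<omega>) z w" using nE \<omega>s that unfolding E1_def by blast
        then show ?thesis by simp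
      qed
      have n2: "(\<Sum>i<p. (snd \<omega> i)\<^sup>2) < (39/20 * Q)\<^sup>2"
      proof -
        have "\<not> (39/20 * Q)\<^sup>2 \<le> (\<Sum>i<p. (snd \<omega> i)\<^sup>2)" using nE \<omega>s unfolding E2_def by blast
        then show ?thesis by simp
      qed
      have Nc: "noise_mat p \<omega> \<in> carrier_mat p p" unfolding noise_mat_def by simp
      have nc: "noise_vec p \<omega> \<in> carrier_vec p" unfolding noise_vec_def by simp
      have tN: "vnorm (noise_mat p \<omega> *\<^sub>v x) \<le> 25 * Q * vnorm x" if "x \<in> carrier_vec p" for x
      proof -
        have "vnorm (noise_mat p \<omega> *\<^sub>v x) \<le> 4 * T / (7 * real p) * vnorm x"
          by (rule net_bound[OF Nc p n1 that])
        also have "4 * T / (7 * real p) = 25 * Q" unfolding T_def using p by simp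
        finally show ?thesis .
      qed
      have nn: "vnorm (noise_vec p \<omega>) \<le> 39 / 20 * (\<eta> * sm / 1000)"
      proof -
        have "(vnorm (noise_vec p \<omega>))\<^sup>2 = (\<Sum>i<p. ((noise_vec p \<omega>) $ i)\<^sup>2)"
          using vnorm_sq_sum[of "noise_vec p \<omega>"] nc by simp
        also have "\<dots> = (\<Sum>i<p. (snd \<omega> i)\<^sup>2)" unfolding noise_vec_def by (rule sum.cong) auto
        finally have e1: "(vnorm (noise_vec p \<omega>))\<^sup>2 < (39/20 * Q)\<^sup>2" using n2 by linarith
        have q0: "0 \<le> 39/20 * Q" using Q0 by simp
        have "vnorm (noise_vec p \<omega>) < 39/20 * Q" by (rule power2_less_imp_less[OF e1 q0])
        moreover have "39/20 * Q \<le> 39 / 20 * (\<eta> * sm / 1000)" using smQ by linarith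
        ultimately show ?thesis by linarith
      qed
      have "f \<omega> \<le> 2 * \<eta> * vnorm \<beta> + \<eta> / 500" unfolding f_def
        by (rule det_main[OF Ac Nc bc nc \<beta>c A\<beta> sm0 sA tN eta tauB nn]) auto
      then have "\<omega> \<in> Tg" using \<omega> unfolding Tg_def by simp
      then show False using \<omega> by simp
    qed
  qed
  have Kz: "(vnorm z)\<^sup>2 * (vnorm w)\<^sup>2 \<le> (25 * real p / 4)\<^sup>2" if z: "z \<in> netv p" and w: "w \<in> netv p" for z w
  proof -
    have a: "(vnorm z)\<^sup>2 \<le> 25 * real p / 4" "(vnorm w)\<^sup>2 \<le> 25 * real p / 4" using netc[OF z] netc[OF w] by auto
    have "(vnorm z)\<^sup>2 * (vnorm w)\<^sup>2 \<le> (25 * real p / 4) * (25 * real p / 4)"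
      by (rule mult_mono[OF a(1) a(2)]) auto
    then show ?thesis by (simp only: power2_eq_square[of "25 * real p / 4"])
  qed
  have K0: "0 < (25 * real p / 4)\<^sup>2" using p by simp
  have pm: "{\<omega> \<in> space \<Omega>. T \<le> bf (noise_mat p \<omega>) z w} \<in> P.events" if z: "z \<in> netv p" and w: "w \<in> netv p" for z w
    unfolding \<Omega>_def by (rule pair_tail(1)[OF s netc(1)[OF z] netc(1)[OF w] T0 Kz[OF z w] K0])
  have each: "P.prob {\<omega> \<in> space \<Omega>. T \<le> bf (noise_mat p \<omega>) z w} \<le> exp (- (49/2) * real p * L\<^sup>2)"
    if z: "z \<in> netv p" and w: "w \<in> netv p" for z w
  proof -
    have "P.prob {\<omega> \<in> space \<Omega>. T \<le> bf (noise_mat p \<omega>) z w} \<le> exp (- T\<^sup>2 / (2 * \<sigma>\<^sup>2 * (25 * real p / 4)\<^sup>2))"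
      unfolding \<Omega>_def by (rule pair_tail(2)[OF s netc(1)[OF z] netc(1)[OF w] T0 Kz[OF z w] K0])
    also have "- T\<^sup>2 / (2 * \<sigma>\<^sup>2 * (25 * real p / 4)\<^sup>2) = - (49/2) * real p * L\<^sup>2"
    proof -
      have Q2: "Q\<^sup>2 = \<sigma>\<^sup>2 * real p * L\<^sup>2" unfolding Q_def by (simp add: power_mult_distrib)
      have T2: "T\<^sup>2 = (175/4)\<^sup>2 * (real p)\<^sup>2 * Q\<^sup>2" unfolding T_def by (simp add: power_mult_distrib power_divide)
      have D: "2 * \<sigma>\<^sup>2 * (25 * real p / 4)\<^sup>2 = (1250/16) * (\<sigma>\<^sup>2 * (real p)\<^sup>2)"
        by (simp add: power_mult_distrib power_divide)
      have nz: "\<sigma>\<^sup>2 * (real p)\<^sup>2 \<noteq> 0" using s p by simp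
      have "- T\<^sup>2 / (2 * \<sigma>\<^sup>2 * (25 * real p / 4)\<^sup>2)
          = - ((175/4)\<^sup>2 * real p * L\<^sup>2 * (\<sigma>\<^sup>2 * (real p)\<^sup>2)) / ((1250/16) * (\<sigma>\<^sup>2 * (real p)\<^sup>2))"
        unfolding T2 Q2 D by (simp add: algebra_simps)
      also have "\<dots> = - ((175/4)\<^sup>2 * real p * L\<^sup>2) / (1250/16)"
        by (simp only: minus_divide_left[symmetric] nonzero_mult_divide_mult_cancel_right[OF nz])
      also have "\<dots> = - (49/2) * real p * L\<^sup>2" by (simp add: power2_eq_square)
      finally show ?thesis .
    qed
    finally show ?thesis .
  qed
  have E1m: "E1 \<in> P.events" unfolding E1_def using pm nfin(1) by (intro sets.finite_UN) auto
  have "P.prob E1 \<le> (\<Sum>z\<in>netv p. P.prob (\<Union>w\<in>netv p. {\<omega> \<in> space \<Omega>. T \<le> bf (noise_mat p \<omega>) z w}))"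
    unfolding E1_def using pm nfin(1) by (intro measure_UNION_le sets.finite_UN) auto
  also have "\<dots> \<le> (\<Sum>z\<in>netv p. \<Sum>w\<in>netv p. P.prob {\<omega> \<in> space \<Omega>. T \<le> bf (noise_mat p \<omega>) z w})"
    using pm nfin(1) by (intro sum_mono measure_UNION_le) auto
  also have "\<dots> \<le> (\<Sum>z\<in>netv p. \<Sum>w\<in>netv p. exp (- (49/2) * real p * L\<^sup>2))"
    using each by (intro sum_mono) auto
  also have "\<dots> = real (card (netv p)) * real (card (netv p)) * exp (- (49/2) * real p * L\<^sup>2)" by simp
  also have "\<dots> \<le> exp (9 * real p) * exp (9 * real p) * exp (- (49/2) * real p * L\<^sup>2)"
    using nfin(2) by (intro mult_right_mono mult_mono) auto
  also have "\<dots> \<le> exp (- L) / 20" by (rule num1) (use L1 p in auto)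
  finally have mE1: "P.prob E1 \<le> exp (- L) / 20" .
  have mE2: "P.prob E2 \<le> 9/10 * exp (- L)"
  proof (cases "p = 1")
    case True
    have QL: "Q = \<sigma> * L" unfolding Q_def True by simp
    define S1 where "S1 = {\<omega> \<in> space \<Omega>. 39/20 * Q \<le> 1 * snd \<omega> 0}"
    define S2 where "S2 = {\<omega> \<in> space \<Omega>. 39/20 * Q \<le> (-1) * snd \<omega> 0}"
    have aQ: "0 \<le> 39/20 * Q" using Q0 by simp
    have S1m: "S1 \<in> P.events" unfolding S1_def \<Omega>_def by (rule n_lin_tail(1)[OF s p _ aQ]) simp
    have S2m: "S2 \<in> P.events" unfolding S2_def \<Omega>_def by (rule n_lin_tail(1)[OF s p _ aQ]) simp
    have "E2 \<subseteq> S1 \<union> S2"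
    proof
      fix \<omega> assume "\<omega> \<in> E2"
      then have \<omega>: "\<omega> \<in> space \<Omega>" "(39/20 * Q)\<^sup>2 \<le> (snd \<omega> 0)\<^sup>2" unfolding E2_def True by auto
      then have "39/20 * Q \<le> \<bar>snd \<omega> 0\<bar>" using aQ by (metis abs_le_square_iff abs_of_nonneg)
      then show "\<omega> \<in> S1 \<union> S2" unfolding S1_def S2_def using \<omega>(1) by (auto simp: abs_if split: if_splits)
    qed
    then have "P.prob E2 \<le> P.prob (S1 \<union> S2)" using S1m S2m by (intro P.finite_measure_mono) auto
    also have "\<dots> \<le> P.prob S1 + P.prob S2" using S1m S2m by (rule measure_Un_le)
    also have "\<dots> \<le> exp (- (39/20 * Q)\<^sup>2 / (2 * \<sigma>\<^sup>2)) + exp (- (39/20 * Q)\<^sup>2 / (2 * \<sigma>\<^sup>2))"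
      unfolding S1_def S2_def \<Omega>_def by (intro add_mono n_lin_tail(2)[OF s p _ aQ]) auto
    also have "- (39/20 * Q)\<^sup>2 / (2 * \<sigma>\<^sup>2) = - ((39/20)\<^sup>2 * L\<^sup>2 / 2)"
    proof -
      have "(39/20 * Q)\<^sup>2 = ((39/20)\<^sup>2 * L\<^sup>2) * \<sigma>\<^sup>2" unfolding QL by (simp add: power2_eq_square)
      then show ?thesis using s by (simp add: field_simps)
    qed
    also have "exp (- ((39/20)\<^sup>2 * L\<^sup>2 / 2)) + exp (- ((39/20)\<^sup>2 * L\<^sup>2 / 2)) = 2 * exp (- ((39/20)\<^sup>2 * L\<^sup>2 / 2))"
      by simp
    also have "\<dots> \<le> 9/10 * exp (- L)" by (rule num2) (use L1 in simp)
    finally show ?thesis by simp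
  next
    case False
    then have p2: "2 \<le> p" using p by simp
    have "P.prob E2 \<le> sqrt 2 ^ p * exp (- (39/20 * Q)\<^sup>2 / (4 * \<sigma>\<^sup>2))"
      unfolding E2_def \<Omega>_def by (rule n_sq_tail(2)[OF s])
    also have "- (39/20 * Q)\<^sup>2 / (4 * \<sigma>\<^sup>2) = - ((39/20)\<^sup>2 * (real p * L\<^sup>2) / 4)"
    proof -
      have "(39/20 * Q)\<^sup>2 = ((39/20)\<^sup>2 * (real p * L\<^sup>2)) * \<sigma>\<^sup>2" unfolding Q_def by (simp add: power_mult_distrib power2_eq_square)
      then show ?thesis using s by (simp add: field_simps)
    qed
    also have "sqrt 2 ^ p * exp (- ((39/20)\<^sup>2 * (real p * L\<^sup>2) / 4)) \<le> 9/10 * exp (- L)"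
      by (rule num3) (use L1 p2 in auto)
    finally show ?thesis by simp
  qed
  have "1 - P.prob Tg = P.prob (space \<Omega> - Tg)" using P.prob_compl[OF Tgm] by simp
  also have "\<dots> \<le> P.prob (E1 \<union> E2)" using sub E1m E2m by (intro P.finite_measure_mono) auto
  also have "\<dots> \<le> P.prob E1 + P.prob E2" using E1m E2m by (rule measure_Un_le)
  also have "\<dots> \<le> exp (- L) / 20 + 9/10 * exp (- L)" using mE1 mE2 by simp
  also have "\<dots> \<le> \<nu>" using nuL nu by simp
  finally have "1 - \<nu> \<le> P.prob Tg" by simp
  then show ?thesis unfolding Tg_def f_def \<Omega>_def \<beta>_def A_def b_def .
qed

theorem theoremC1:
  "\<exists>C::real. C \<ge> 1 \<and>
    (\<forall>(n::nat) (p::nat) (X::real mat) (y::real vec) (\<eta>::real) (\<nu>::real) (\<sigma>::real).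
      X \<in> carrier_mat n p \<longrightarrow> y \<in> carrier_vec n \<longrightarrow>
      invertible_mat (transpose_mat X * X) \<longrightarrow>
      0 < \<eta> \<longrightarrow> \<eta> < 1 \<longrightarrow> 0 < \<nu> \<longrightarrow> \<nu> < 1 / exp 1 \<longrightarrow> 0 < \<sigma> \<longrightarrow>
      sigma_min (transpose_mat X * X) \<ge> 2 * C / \<eta> * \<sigma> * sqrt (real p) * ln (1 / \<nu>) \<longrightarrow>
      (let A = transpose_mat X * X; b = transpose_mat X *\<^sub>v y;
           \<beta>hat = minv A *\<^sub>v b in
       measure (noise_space p \<sigma>)
         {\<omega> \<in> space (noise_space p \<sigma>).
            vnorm (minv (A + noise_mat p \<omega>) *\<^sub>v (b + noise_vec p \<omega>) - \<beta>hat)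
              \<le> 2 * \<eta> * vnorm \<beta>hat + \<eta> / C}
       \<ge> 1 - \<nu>))"
proof (intro exI[of _ "500::real"] conjI allI impI)
  show "(1::real) \<le> 500" by simp
  fix n p :: nat and X :: "real mat" and y :: "real vec" and \<eta> \<nu> \<sigma> :: real
  assume X: "X \<in> carrier_mat n p" and y: "y \<in> carrier_vec n"
    and inv: "invertible_mat (transpose_mat X * X)"
    and eta1: "0 < \<eta>" and eta2: "\<eta> < 1" and nu1: "0 < \<nu>" and nu2: "\<nu> < 1 / exp 1" and s: "0 < \<sigma>"
    and hyp: "sigma_min (transpose_mat X * X) \<ge> 2 * 500 / \<eta> * \<sigma> * sqrt (real p) * ln (1 / \<nu>)"
  show "let A = transpose_mat X * X; b = transpose_mat X *\<^sub>v y;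
           \<beta>hat = minv A *\<^sub>v b in
       measure (noise_space p \<sigma>)
         {\<omega> \<in> space (noise_space p \<sigma>).
            vnorm (minv (A + noise_mat p \<omega>) *\<^sub>v (b + noise_vec p \<omega>) - \<beta>hat)
              \<le> 2 * \<eta> * vnorm \<beta>hat + \<eta> / 500}
       \<ge> 1 - \<nu>"
  proof (cases "p = 0")
    case True
    interpret P: prob_space "noise_space p \<sigma>" by (rule ns_prob[OF s])
    let ?A = "transpose_mat X * X"
    have Ac: "?A \<in> carrier_mat p p" using X by simp
    have "{\<omega> \<in> space (noise_space p \<sigma>).
            vnorm (minv (?A + noise_mat p \<omega>) *\<^sub>v (transpose_mat X *\<^sub>v y + noise_vec p \<omega>) - minv ?A *\<^sub>v (transpose_mat X *\<^sub>v y))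
              \<le> 2 * \<eta> * vnorm (minv ?A *\<^sub>v (transpose_mat X *\<^sub>v y)) + \<eta> / 500} = space (noise_space p \<sigma>)"
    proof -
      have "vnorm (minv (?A + noise_mat p \<omega>) *\<^sub>v (transpose_mat X *\<^sub>v y + noise_vec p \<omega>) - minv ?A *\<^sub>v (transpose_mat X *\<^sub>v y)) = 0" for \<omega>
      proof -
        have "minv (?A + noise_mat p \<omega>) \<in> carrier_mat p p"
          using Ac by (intro minv_carrier) (auto simp: noise_mat_def)
        then show ?thesis using True minv_carrier[OF Ac] by (simp add: vnorm_def)
      qed
      moreover have "0 \<le> 2 * \<eta> * vnorm (minv ?A *\<^sub>v (transpose_mat X *\<^sub>v y)) + \<eta> / 500"
        using eta1 vnorm_nonneg by simp
      ultimately show ?thesis by auto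
    qed
    moreover have "P.prob (space (noise_space p \<sigma>)) = 1" by (rule P.prob_space)
    ultimately show ?thesis using nu1 unfolding Let_def by simp
  next
    case False
    then show ?thesis using main_pos[OF X y eta1 eta2 nu1 nu2 s hyp] unfolding Let_def by simp
  qed
qed


end
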